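(* Let $L$ be a multisorted algebra in the positive quantifier-free signature. Then $L$ satisfies axioms (0), (1), (2), (3), (4) if and only if $L$ is isomorphic to a subalgebra of the positive quantifier-free algebra $A(W)$ of some set $W$.
   Context: Throughout, the Boolean prime ideal theorem is assumed. Signature. There is a sort $n$ for each natural number $n\ge 0$. For every function $\alpha\colon\{1,\dots,n\}\to\{1,\dots,k\}$ there is a unary function symbol ("substitution") $\alpha\colon n\to k$ (argument of sort $n$, value of sort $k$). For each sort $n$ there are constants $0^n,1^n$ of sort $n$ and binary operations $\vee^n,\wedge^n$ on sort $n$ (superscripts usually omitted). This is the positive quantifier-free signature. If $\alpha\colon k\to n$ and $\beta\colon n\to m$ are substitutions, $\beta\circ\alpha\colon k\to m$ denotes the substitution symbol of the composite function $\{1,\dots,k\}\to\{1,\dots,m\}$, while $\beta(\alpha(r))$ denotes composition of the operations inside an algebra. $\mathrm{id}\colon n\to n$ is the identity substitution. Concrete algebras. For a set $W$ and a substitution $\alpha\colon\{1,\dots,n\}\to\{1,\dots,k\}$ put $\alpha^{\mathrm{tuple}}\colon W^k\to W^n$, $\alpha^{\mathrm{tuple}}(x_1,\dots,x_k)=(x_{\alpha(1)},\dots,x_{\alpha(n)})$, and $\alpha^{\mathrm{relation}}\colon\mathcal P(W^n)\to\mathcal P(W^k)$, $\alpha^{\mathrm{relation}}(r)=\{\bar x\in W^k:\alpha^{\mathrm{tuple}}(\bar x)\in r\}$. The positive quantifier-free algebra $A(W)$ has sort $n$ interpreted as $\mathcal P(W^n)$, each substitution $\alpha$ interpreted as $\alpha^{\mathrm{relation}}$,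 and $0,1,\vee,\wedge$ on sort $n$ interpreted as $\emptyset, W^n,\cup,\cap$. (Note $W^0$ has exactly one element, so sort $0$ of $A(W)$ has two elements.) Subalgebras and morphisms are in the multisorted sense. Partitioning cylindrifications: given $k_1,\dots,k_m\ge 0$ and $n=k_1+\dots+k_m$, the substitutions $c_i\colon k_i\to n$ given by $c_i(l)=l+\sum_{j<i}k_j$ (so $c_i^{\mathrm{tuple}}(\bar x_1\cdots\bar x_m)=\bar x_i$). In an algebra, $x\le y$ (also written $y\ge x$) means $x=x\wedge y$. Axioms: (0) For all partitioning cylindrifications $c_1,\dots,c_m$ with $c_i\colon k_i\to k_1+\dots+k_m$, and all $r_i,s_i$ of sort $k_i$: if $\bigvee_{i=1}^m c_i(s_i)\ge\bigwedge_{i=1}^m c_i(r_i)$ then $s_i\ge r_i$ for some $i$. This includes the case $m=0$ (empty join $=0$, empty meet $=1$ in sort $0$, empty disjunction false), i.e. $0\ge 1$ fails in sort $0$. (1) In each sort, $0,1,\vee,\wedge$ form a bounded distributive lattice. (2) Every substitution preserves $0,1,\vee,\wedge$ (e.g. $\alpha(r\wedge s)=\alpha(r)\wedge\alpha(s)$). (3) For substitutions $\alpha\colon k\to n$, $\beta\colon n\to m$ and all $r$ of sort $k$: $(\beta\circ\alpha)(r)=\beta(\alpha(r))$. (4) For all $r$ of sort $n$: $\mathrm{id}(r)=r$. *)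

theory Defs
  imports Main
begin

text \<open>A substitution symbol alpha : n -> k (a function {1..n} -> {1..k}) is
  represented canonically by the list [alpha(1), ..., alpha(n)] (length n,
  entries in {1..k}); psub L alpha k is its interpretation (sort length alpha
  to sort k).\<close>

record 'a pqf_alg =
  pcar  :: "nat \<Rightarrow> 'a set"
  psub  :: "nat list \<Rightarrow> nat \<Rightarrow> 'a \<Rightarrow> 'a"
  pzero :: "nat \<Rightarrow> 'a"
  pone  :: "nat \<Rightarrow> 'a"
  pjoin :: "nat \<Rightarrow> 'a \<Rightarrow> 'a \<Rightarrow> 'a"
  pmeet :: "nat \<Rightarrow> 'a \<Rightarrow> 'a \<Rightarrow> 'a"

definition subst_sym :: "nat list \<Rightarrow> nat \<Rightarrow> bool" where
  "subst_sym \<alpha> k \<longleftrightarrow> set \<alpha> \<subseteq> {1..k}"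

definition pqf_alg :: "('a, 'b) pqf_alg_scheme \<Rightarrow> bool" where
  "pqf_alg L \<longleftrightarrow>
     (\<forall>n. pzero L n \<in> pcar L n \<and> pone L n \<in> pcar L n) \<and>
     (\<forall>n. \<forall>x\<in>pcar L n. \<forall>y\<in>pcar L n. pjoin L n x y \<in> pcar L n \<and> pmeet L n x y \<in> pcar L n) \<and>
     (\<forall>\<alpha> k. subst_sym \<alpha> k \<longrightarrow> (\<forall>r\<in>pcar L (length \<alpha>). psub L \<alpha> k r \<in> pcar L k))"

definition ple :: "('a, 'b) pqf_alg_scheme \<Rightarrow> nat \<Rightarrow> 'a \<Rightarrow> 'a \<Rightarrow> bool" where
  "ple L n x y \<longleftrightarrow> x = pmeet L n x y"

definition pbigjoin :: "('a, 'b) pqf_alg_scheme \<Rightarrow> nat \<Rightarrow> 'a list \<Rightarrow> 'a" where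
  "pbigjoin L n xs = foldr (pjoin L n) xs (pzero L n)"

definition pbigmeet :: "('a, 'b) pqf_alg_scheme \<Rightarrow> nat \<Rightarrow> 'a list \<Rightarrow> 'a" where
  "pbigmeet L n xs = foldr (pmeet L n) xs (pone L n)"

definition subst_comp :: "nat list \<Rightarrow> nat list \<Rightarrow> nat list" where
  "subst_comp \<beta> \<alpha> = map (\<lambda>i. \<beta> ! (i - 1)) \<alpha>"

definition subst_id :: "nat \<Rightarrow> nat list" where
  "subst_id n = [1..<Suc n]"

text \<open>Partitioning cylindrification c_i : k_i -> k_1+...+k_m, for ks = [k_1,...,k_m]
  and i < m (0-based list index): c_i(l) = l + sum_{j<i} k_j.\<close>
definition cyl :: "nat list \<Rightarrow> nat \<Rightarrow> nat list" where
  "cyl ks i = map (\<lambda>l. l + sum_list (take i ks)) [1..<Suc (ks ! i)]"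

definition axiom0 :: "('a, 'b) pqf_alg_scheme \<Rightarrow> bool" where
  "axiom0 L \<longleftrightarrow>
    (\<forall>ks rs ss. let m = length ks; n = sum_list ks in
      (\<forall>i<m. rs i \<in> pcar L (ks ! i) \<and> ss i \<in> pcar L (ks ! i)) \<longrightarrow>
      ple L n (pbigmeet L n (map (\<lambda>i. psub L (cyl ks i) n (rs i)) [0..<m]))
              (pbigjoin L n (map (\<lambda>i. psub L (cyl ks i) n (ss i)) [0..<m])) \<longrightarrow>
      (\<exists>i<m. ple L (ks ! i) (rs i) (ss i)))"

definition axiom1 :: "('a, 'b) pqf_alg_scheme \<Rightarrow> bool" where
  "axiom1 L \<longleftrightarrow> (\<forall>n. \<forall>x\<in>pcar L n. \<forall>y\<in>pcar L n. \<forall>z\<in>pcar L n.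
      pjoin L n x y = pjoin L n y x \<and> pmeet L n x y = pmeet L n y x \<and>
      pjoin L n (pjoin L n x y) z = pjoin L n x (pjoin L n y z) \<and>
      pmeet L n (pmeet L n x y) z = pmeet L n x (pmeet L n y z) \<and>
      pjoin L n x (pmeet L n x y) = x \<and> pmeet L n x (pjoin L n x y) = x \<and>
      pmeet L n x (pjoin L n y z) = pjoin L n (pmeet L n x y) (pmeet L n x z) \<and>
      pjoin L n x (pzero L n) = x \<and> pmeet L n x (pone L n) = x)"

definition axiom2 :: "('a, 'b) pqf_alg_scheme \<Rightarrow> bool" where
  "axiom2 L \<longleftrightarrow> (\<forall>\<alpha> k. subst_sym \<alpha> k \<longrightarrow>
      psub L \<alpha> k (pzero L (length \<alpha>)) = pzero L k \<and>
      psub L \<alpha> k (pone L (length \<alpha>)) = pone L k \<and>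
      (\<forall>r\<in>pcar L (length \<alpha>). \<forall>s\<in>pcar L (length \<alpha>).
         psub L \<alpha> k (pjoin L (length \<alpha>) r s) = pjoin L k (psub L \<alpha> k r) (psub L \<alpha> k s) \<and>
         psub L \<alpha> k (pmeet L (length \<alpha>) r s) = pmeet L k (psub L \<alpha> k r) (psub L \<alpha> k s)))"

definition axiom3 :: "('a, 'b) pqf_alg_scheme \<Rightarrow> bool" where
  "axiom3 L \<longleftrightarrow> (\<forall>\<alpha> \<beta> m. subst_sym \<alpha> (length \<beta>) \<longrightarrow> subst_sym \<beta> m \<longrightarrow>
      (\<forall>r\<in>pcar L (length \<alpha>).
         psub L (subst_comp \<beta> \<alpha>) m r = psub L \<beta> m (psub L \<alpha> (length \<beta>) r)))"

definition axiom4 :: "('a, 'b) pqf_alg_scheme \<Rightarrow> bool" where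
  "axiom4 L \<longleftrightarrow> (\<forall>n. \<forall>r\<in>pcar L n. psub L (subst_id n) n r = r)"

text \<open>The positive quantifier-free algebra A(W): sort n is the power set of W^n
  (n-tuples represented as lists of length n).\<close>
definition tuples :: "'w set \<Rightarrow> nat \<Rightarrow> 'w list set" where
  "tuples W n = {xs. length xs = n \<and> set xs \<subseteq> W}"

definition tuple_subst :: "nat list \<Rightarrow> 'w list \<Rightarrow> 'w list" where
  "tuple_subst \<alpha> xs = map (\<lambda>i. xs ! (i - 1)) \<alpha>"

definition relA :: "'w set \<Rightarrow> 'w list set pqf_alg" where
  "relA W = \<lparr> pcar = (\<lambda>n. Pow (tuples W n)),
              psub = (\<lambda>\<alpha> k r. {xs \<in> tuples W k. tuple_subst \<alpha> xs \<in> r}),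
              pzero = (\<lambda>n. {}),
              pone = (\<lambda>n. tuples W n),
              pjoin = (\<lambda>n. (\<union>)),
              pmeet = (\<lambda>n. (\<inter>)) \<rparr>"

definition subalgebra :: "('a, 'b) pqf_alg_scheme \<Rightarrow> ('a, 'c) pqf_alg_scheme \<Rightarrow> bool" where
  "subalgebra S A \<longleftrightarrow> pqf_alg S \<and>
     (\<forall>n. pcar S n \<subseteq> pcar A n) \<and>
     (\<forall>n. pzero S n = pzero A n \<and> pone S n = pone A n) \<and>
     (\<forall>n. \<forall>x\<in>pcar S n. \<forall>y\<in>pcar S n. pjoin S n x y = pjoin A n x y \<and> pmeet S n x y = pmeet A n x y) \<and>
     (\<forall>\<alpha> k. subst_sym \<alpha> k \<longrightarrow> (\<forall>r\<in>pcar S (length \<alpha>). psub S \<alpha> k r = psub A \<alpha> k r))"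

definition hom :: "(nat \<Rightarrow> 'a \<Rightarrow> 'b) \<Rightarrow> ('a, 'c) pqf_alg_scheme \<Rightarrow> ('b, 'd) pqf_alg_scheme \<Rightarrow> bool" where
  "hom h L M \<longleftrightarrow>
     (\<forall>n. h n ` pcar L n \<subseteq> pcar M n) \<and>
     (\<forall>n. h n (pzero L n) = pzero M n \<and> h n (pone L n) = pone M n) \<and>
     (\<forall>n. \<forall>x\<in>pcar L n. \<forall>y\<in>pcar L n.
        h n (pjoin L n x y) = pjoin M n (h n x) (h n y) \<and>
        h n (pmeet L n x y) = pmeet M n (h n x) (h n y)) \<and>
     (\<forall>\<alpha> k. subst_sym \<alpha> k \<longrightarrow> (\<forall>r\<in>pcar L (length \<alpha>).
        h k (psub L \<alpha> k r) = psub M \<alpha> k (h (length \<alpha>) r)))"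

definition iso :: "(nat \<Rightarrow> 'a \<Rightarrow> 'b) \<Rightarrow> ('a, 'c) pqf_alg_scheme \<Rightarrow> ('b, 'd) pqf_alg_scheme \<Rightarrow> bool" where
  "iso h L M \<longleftrightarrow> hom h L M \<and> (\<forall>n. bij_betw (h n) (pcar L n) (pcar M n))"

definition iso_to_sub_of_A :: "('a, 'c) pqf_alg_scheme \<Rightarrow> 'w set \<Rightarrow> bool" where
  "iso_to_sub_of_A L W \<longleftrightarrow>
     (\<exists>S :: 'w list set pqf_alg. \<exists>h. subalgebra S (relA W) \<and> iso h L S)"

end

theory Submission
  imports Defs
begin

locale dlat =
  fixes C :: "'a set" and jn mt :: "'a \<Rightarrow> 'a \<Rightarrow> 'a" and zr on :: 'a
  assumes zr_C: "zr \<in> C" and on_C: "on \<in> C"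
    and jn_C: "x \<in> C \<Longrightarrow> y \<in> C \<Longrightarrow> jn x y \<in> C"
    and mt_C: "x \<in> C \<Longrightarrow> y \<in> C \<Longrightarrow> mt x y \<in> C"
    and jn_comm: "x \<in> C \<Longrightarrow> y \<in> C \<Longrightarrow> jn x y = jn y x"
    and mt_comm: "x \<in> C \<Longrightarrow> y \<in> C \<Longrightarrow> mt x y = mt y x"
    and jn_assoc: "x \<in> C \<Longrightarrow> y \<in> C \<Longrightarrow> z \<in> C \<Longrightarrow> jn (jn x y) z = jn x (jn y z)"
    and mt_assoc: "x \<in> C \<Longrightarrow> y \<in> C \<Longrightarrow> z \<in> C \<Longrightarrow> mt (mt x y) z = mt x (mt y z)"
    and absorb1: "x \<in> C \<Longrightarrow> y \<in> C \<Longrightarrow> jn x (mt x y) = x"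
    and absorb2: "x \<in> C \<Longrightarrow> y \<in> C \<Longrightarrow> mt x (jn x y) = x"
    and distr: "x \<in> C \<Longrightarrow> y \<in> C \<Longrightarrow> z \<in> C \<Longrightarrow> mt x (jn y z) = jn (mt x y) (mt x z)"
    and jn_zr: "x \<in> C \<Longrightarrow> jn x zr = x"
    and mt_on: "x \<in> C \<Longrightarrow> mt x on = x"
begin

definition le where "le x y \<longleftrightarrow> x = mt x y"

lemma mt_idem: "x \<in> C \<Longrightarrow> mt x x = x"
proof -
  assume x: "x \<in> C"
  have "mt x x = mt x (jn x (mt x x))" using absorb1[OF x x] by simp
  also have "\<dots> = x" using absorb2[OF x mt_C[OF x x]] .
  finally show ?thesis .
qed

lemma jn_idem: "x \<in> C \<Longrightarrow> jn x x = x"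
proof -
  assume x: "x \<in> C"
  have "jn x x = jn x (mt x (jn x x))" using absorb2[OF x x] by simp
  also have "\<dots> = x" using absorb1[OF x jn_C[OF x x]] .
  finally show ?thesis .
qed

lemma le_refl: "x \<in> C \<Longrightarrow> le x x"
  by (simp add: le_def mt_idem)

lemma le_trans: "x \<in> C \<Longrightarrow> y \<in> C \<Longrightarrow> z \<in> C \<Longrightarrow> le x y \<Longrightarrow> le y z \<Longrightarrow> le x z"
  unfolding le_def by (metis mt_assoc)

lemma le_antisym: "x \<in> C \<Longrightarrow> y \<in> C \<Longrightarrow> le x y \<Longrightarrow> le y x \<Longrightarrow> x = y"
  unfolding le_def by (metis mt_comm)

lemma le_mt1: "x \<in> C \<Longrightarrow> y \<in> C \<Longrightarrow> le (mt x y) x"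
  unfolding le_def by (simp add: mt_assoc mt_comm[of y x] mt_assoc[symmetric] mt_idem)

lemma le_mt2: "x \<in> C \<Longrightarrow> y \<in> C \<Longrightarrow> le (mt x y) y"
  unfolding le_def by (simp add: mt_assoc mt_idem)

lemma le_glb: "x \<in> C \<Longrightarrow> y \<in> C \<Longrightarrow> z \<in> C \<Longrightarrow> le z x \<Longrightarrow> le z y \<Longrightarrow> le z (mt x y)"
  unfolding le_def by (metis mt_assoc)

lemma le_jn_iff: "x \<in> C \<Longrightarrow> y \<in> C \<Longrightarrow> le x y \<longleftrightarrow> y = jn x y"
proof -
  assume x: "x \<in> C" and y: "y \<in> C"
  show ?thesis
  proof
    assume "le x y" then have "x = mt y x" unfolding le_def using mt_comm[OF x y] by simp
    then have "jn x y = jn y (mt y x)" using jn_comm[OF x y] by simp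
    then show "y = jn x y" using absorb1[OF y x] by simp
  next
    assume "y = jn x y" then have "mt x y = mt x (jn x y)" by simp
    then show "le x y" unfolding le_def using absorb2[OF x y] by simp
  qed
qed

lemma le_jn1: "x \<in> C \<Longrightarrow> y \<in> C \<Longrightarrow> le x (jn x y)"
  unfolding le_def by (simp add: absorb2)

lemma le_jn2: "x \<in> C \<Longrightarrow> y \<in> C \<Longrightarrow> le y (jn x y)"
  using jn_comm le_jn1 by metis

lemma le_lub: "x \<in> C \<Longrightarrow> y \<in> C \<Longrightarrow> z \<in> C \<Longrightarrow> le x z \<Longrightarrow> le y z \<Longrightarrow> le (jn x y) z"
proof -
  assume x: "x \<in> C" and y: "y \<in> C" and z: "z \<in> C" and "le x z" "le y z"
  then have 1: "z = jn x z" "z = jn y z" using le_jn_iff by auto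
  have "jn (jn x y) z = jn x (jn y z)" using jn_assoc[OF x y z] .
  also have "\<dots> = z" using 1 by simp
  finally show ?thesis using le_jn_iff[OF jn_C[OF x y] z] by simp
qed

lemma le_zr: "x \<in> C \<Longrightarrow> le zr x"
  using le_jn_iff[OF zr_C] jn_comm[OF zr_C] jn_zr by simp

lemma le_on: "x \<in> C \<Longrightarrow> le x on"
  by (simp add: le_def mt_on)

lemma le_mt_mono: "x \<in> C \<Longrightarrow> y \<in> C \<Longrightarrow> z \<in> C \<Longrightarrow> le x y \<Longrightarrow> le (mt x z) (mt y z)"
  by (meson le_glb le_mt1 le_mt2 le_trans mt_C)

definition filt where "filt F \<longleftrightarrow> F \<subseteq> C \<and> on \<in> F \<and> (\<forall>x\<in>F. \<forall>y\<in>C. le x y \<longrightarrow> y \<in> F)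
   \<and> (\<forall>x\<in>F. \<forall>y\<in>F. mt x y \<in> F)"

theorem prime_filter:
  assumes a: "a \<in> C" and b: "b \<in> C" and nab: "\<not> le a b"
  shows "\<exists>P. P \<subseteq> C \<and> a \<in> P \<and> b \<notin> P \<and> on \<in> P \<and> zr \<notin> P \<and>
     (\<forall>x\<in>C. \<forall>y\<in>C. (mt x y \<in> P \<longleftrightarrow> x \<in> P \<and> y \<in> P) \<and> (jn x y \<in> P \<longleftrightarrow> x \<in> P \<or> y \<in> P))"
proof -
  define \<F> where "\<F> = {F. filt F \<and> a \<in> F \<and> b \<notin> F}"
  define up where "up = {y\<in>C. le a y}"
  have up: "up \<in> \<F>"
    unfolding \<F>_def filt_def
  proof (intro CollectI conjI)
    show "up \<subseteq> C" unfolding up_def by blast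
    show "on \<in> up" unfolding up_def using a by (simp add: on_C le_on)
    show "a \<in> up" unfolding up_def using a by (simp add: le_refl)
    show "b \<notin> up" unfolding up_def using nab by blast
    show "\<forall>x\<in>up. \<forall>y\<in>C. le x y \<longrightarrow> y \<in> up"
      unfolding up_def using a by (auto intro: le_trans)
    show "\<forall>x\<in>up. \<forall>y\<in>up. mt x y \<in> up"
      unfolding up_def using a by (auto intro: le_glb mt_C)
  qed
  have mem: "X \<subseteq> C \<and> on \<in> X \<and> a \<in> X \<and> b \<notin> X \<and> (\<forall>x\<in>X. \<forall>y\<in>C. le x y \<longrightarrow> y \<in> X)
     \<and> (\<forall>x\<in>X. \<forall>y\<in>X. mt x y \<in> X)" if "X \<in> \<F>" for X
    using that unfolding \<F>_def filt_def by simp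
  have "\<forall>Ch\<in>chains \<F>. \<exists>U\<in>\<F>. \<forall>X\<in>Ch. X \<subseteq> U"
  proof
    fix Ch assume Ch: "Ch \<in> chains \<F>"
    show "\<exists>U\<in>\<F>. \<forall>X\<in>Ch. X \<subseteq> U"
    proof (cases "Ch = {}")
      case True then show ?thesis using up by blast
    next
      case False
      then obtain X0 where X0: "X0 \<in> Ch" by blast
      have sub: "\<And>X. X \<in> Ch \<Longrightarrow> X \<in> \<F>" using Ch unfolding chains_def by blast
      have ch: "\<And>X Y. X \<in> Ch \<Longrightarrow> Y \<in> Ch \<Longrightarrow> X \<subseteq> Y \<or> Y \<subseteq> X"
        using Ch unfolding chains_def chain_subset_def by blast
      have "\<Union>Ch \<in> \<F>"
        unfolding \<F>_def filt_def
      proof (intro CollectI conjI)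
        show "\<Union>Ch \<subseteq> C"
        proof
          fix x assume "x \<in> \<Union>Ch" then obtain X where "X \<in> Ch" "x \<in> X" by blast
          then show "x \<in> C" using mem[OF sub] by blast
        qed
        show "on \<in> \<Union>Ch" using mem[OF sub[OF X0]] X0 by blast
        show "a \<in> \<Union>Ch" using mem[OF sub[OF X0]] X0 by blast
        show "b \<notin> \<Union>Ch"
        proof
          assume "b \<in> \<Union>Ch" then obtain X where "X \<in> Ch" "b \<in> X" by blast
          then show False using mem[OF sub] by blast
        qed
        show "\<forall>x\<in>\<Union>Ch. \<forall>y\<in>C. le x y \<longrightarrow> y \<in> \<Union>Ch"
        proof (intro ballI impI)
          fix x y assume "x \<in> \<Union>Ch" "y \<in> C" "le x y"
          moreover obtain X where "X \<in> Ch" "x \<in> X" using \<open>x \<in> \<Union>Ch\<close> by blast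
          ultimately have "y \<in> X" using mem[OF sub[of X]] by blast
          then show "y \<in> \<Union>Ch" using \<open>X \<in> Ch\<close> by blast
        qed
        show "\<forall>x\<in>\<Union>Ch. \<forall>y\<in>\<Union>Ch. mt x y \<in> \<Union>Ch"
        proof (intro ballI)
          fix x y assume "x \<in> \<Union>Ch" "y \<in> \<Union>Ch"
          then obtain X Y where XY: "X \<in> Ch" "Y \<in> Ch" "x \<in> X" "y \<in> Y" by blast
          show "mt x y \<in> \<Union>Ch"
          proof (cases "X \<subseteq> Y")
            case True
            then have "mt x y \<in> Y" using XY mem[OF sub[of Y]] by blast
            then show ?thesis using XY by blast
          next
            case False
            then have "Y \<subseteq> X" using ch XY by blast
            then have "mt x y \<in> X" using XY mem[OF sub[of X]] by blast
            then show ?thesis using XY by blast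
          qed
        qed
      qed
      then show ?thesis by blast
    qed
  qed
  from Zorn_Lemma2[OF this] obtain F where F: "F \<in> \<F>" and max0: "\<forall>X\<in>\<F>. F \<subseteq> X \<longrightarrow> X = F"
    by (elim bexE)
  have max: "\<And>X. X \<in> \<F> \<Longrightarrow> F \<subseteq> X \<Longrightarrow> X = F" using max0 by blast
  have FC: "F \<subseteq> C" and onF: "on \<in> F" and upc: "\<And>x y. x \<in> F \<Longrightarrow> y \<in> C \<Longrightarrow> le x y \<Longrightarrow> y \<in> F"
    and mtF: "\<And>x y. x \<in> F \<Longrightarrow> y \<in> F \<Longrightarrow> mt x y \<in> F" and aF: "a \<in> F" and bF: "b \<notin> F"
    using mem[OF F] by auto
  have ext: "\<exists>f\<in>F. le (mt f x) b" if x: "x \<in> C" "x \<notin> F" for x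
  proof (rule ccontr)
    assume nb: "\<not> (\<exists>f\<in>F. le (mt f x) b)"
    define G where "G = {w\<in>C. \<exists>f\<in>F. le (mt f x) w}"
    have "G \<in> \<F>" unfolding \<F>_def filt_def
    proof (intro CollectI conjI)
      show "G \<subseteq> C" unfolding G_def by blast
      show "on \<in> G" unfolding G_def using onF on_C x FC by (auto intro!: bexI[of _ on] le_on mt_C)
      show "a \<in> G" unfolding G_def using aF a x FC by (auto intro!: bexI[of _ a] le_mt1)
      show "b \<notin> G" unfolding G_def using nb by blast
      show "\<forall>xa\<in>G. \<forall>y\<in>C. le xa y \<longrightarrow> y \<in> G"
        unfolding G_def using FC x by (blast intro: le_trans mt_C)
      show "\<forall>xa\<in>G. \<forall>y\<in>G. mt xa y \<in> G"
      proof (intro ballI)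
        fix u v assume "u \<in> G" "v \<in> G"
        then obtain f g where fg: "u \<in> C" "v \<in> C" "f \<in> F" "g \<in> F" "le (mt f x) u" "le (mt g x) v"
          unfolding G_def by blast
        have fgC: "f \<in> C" "g \<in> C" using fg FC by auto
        have "le (mt (mt f g) x) (mt f x)"
          using fgC x by (intro le_mt_mono le_mt1) (auto intro: mt_C)
        moreover have "le (mt (mt f g) x) (mt g x)"
          using fgC x by (intro le_mt_mono le_mt2) (auto intro: mt_C)
        ultimately have "le (mt (mt f g) x) (mt u v)"
          using fg fgC x by (meson le_glb le_trans mt_C)
        then show "mt u v \<in> G" unfolding G_def using fg mtF mt_C by blast
      qed
    qed
    moreover have "F \<subseteq> G" unfolding G_def using FC x by (auto intro: le_mt1)
    ultimately have "G = F" using max by blast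
    moreover have "x \<in> G" unfolding G_def using onF on_C x
      by (auto intro!: bexI[of _ on] le_mt2)
    ultimately show False using x by blast
  qed
  have prime: "jn x y \<notin> F" if xyh: "x \<in> C" "y \<in> C" "x \<notin> F" "y \<notin> F" for x y
  proof
    assume jF: "jn x y \<in> F"
    obtain f where f: "f \<in> F" "le (mt f x) b" using ext xyh by blast
    obtain g where g: "g \<in> F" "le (mt g y) b" using ext xyh by blast
    have fgC: "f \<in> C" "g \<in> C" using f g FC by auto
    define h where "h = mt (mt f g) (jn x y)"
    have hF: "h \<in> F" unfolding h_def using f g jF mtF by blast
    have h_eq: "h = jn (mt (mt f g) x) (mt (mt f g) y)"
      unfolding h_def using fgC xyh by (simp add: distr mt_C)
    have "le (mt (mt f g) x) b"
      using fgC xyh f b by (meson le_mt_mono le_mt1 le_trans mt_C)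
    moreover have "le (mt (mt f g) y) b"
      using fgC xyh g b by (meson le_mt_mono le_mt2 le_trans mt_C)
    ultimately have "le h b" unfolding h_eq using fgC xyh b by (intro le_lub) (auto intro: mt_C)
    then have "b \<in> F" using upc hF b by blast
    then show False using bF by blast
  qed
  have zF: "zr \<notin> F" using upc[of zr b] le_zr b bF by blast
  show ?thesis
  proof (intro exI[of _ F] conjI FC aF bF onF zF ballI)
    fix x y assume xy: "x \<in> C" "y \<in> C"
    show "(mt x y \<in> F) = (x \<in> F \<and> y \<in> F)"
      using xy upc mtF by (meson le_mt1 le_mt2)
    show "(jn x y \<in> F) = (x \<in> F \<or> y \<in> F)"
      using xy upc prime jn_C by (meson le_jn1 le_jn2)
  qed
qed

end

lemma length_cyl[simp]: "length (cyl ks i) = ks ! i"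
  by (simp add: cyl_def)

lemma sum_take_le: "i < length (ks::nat list) \<Longrightarrow> sum_list (take i ks) + ks ! i \<le> sum_list ks"
proof (induction ks arbitrary: i)
  case Nil then show ?case by simp
next
  case (Cons k ks)
  show ?case
  proof (cases i)
    case 0 then show ?thesis by simp
  next
    case (Suc j) then show ?thesis using Cons.IH[of j] Cons.prems by simp
  qed
qed

lemma set_cyl: "i < length ks \<Longrightarrow> set (cyl ks i) \<subseteq> {1..sum_list ks}"
  using sum_take_le[of i ks] by (auto simp: cyl_def)

lemma subst_sym_cyl: "i < length ks \<Longrightarrow> subst_sym (cyl ks i) (sum_list ks)"
  using set_cyl by (simp add: subst_sym_def)

lemma cyl_Cons_Suc: "cyl (k # ks) (Suc i) = map (\<lambda>l. l + k) (cyl ks i)"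
  by (simp add: cyl_def algebra_simps)

lemma cyl_Cons_0: "cyl (k # ks) 0 = [1..<Suc k]"
  by (simp add: cyl_def)

lemma tuple_subst_shift:
  assumes "set c \<subseteq> {1..}" "length x = k"
  shows "tuple_subst (map (\<lambda>l. l + k) c) (x @ r) = tuple_subst c r"
  using assms by (auto simp: tuple_subst_def nth_append intro!: map_cong)

lemma tuple_subst_upt: "length x = k \<Longrightarrow> tuple_subst [1..<Suc k] (x @ r) = x"
proof (rule nth_equalityI)
  assume k: "length x = k"
  show "length (tuple_subst [1..<Suc k] (x @ r)) = length x" using k by (simp add: tuple_subst_def)
  fix i assume "i < length (tuple_subst [1..<Suc k] (x @ r))"
  then have "i < k" by (simp add: tuple_subst_def del: upt_Suc)
  then show "tuple_subst [1..<Suc k] (x @ r) ! i = x ! i" using k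
    by (simp add: tuple_subst_def nth_append del: upt_Suc)
qed

lemma tuple_subst_cyl:
  assumes "ks = map length xss" "i < length xss"
  shows "tuple_subst (cyl ks i) (concat xss @ t) = xss ! i"
  using assms
proof (induction xss arbitrary: ks i)
  case Nil then show ?case by simp
next
  case (Cons x xss)
  show ?case
  proof (cases i)
    case 0 then show ?thesis using Cons.prems tuple_subst_upt[of x "length x"]
      by (simp add: cyl_Cons_0 del: upt_Suc)
  next
    case (Suc i')
    have "set (cyl (map length xss) i') \<subseteq> {1..}" by (auto simp: cyl_def)
    then show ?thesis using Cons Suc
      by (simp add: cyl_Cons_Suc tuple_subst_shift[where k="length x"])
  qed
qed

lemma tuple_subst_cyl':
  assumes "ks = map length xss" "i < length xss"
  shows "tuple_subst (cyl ks i) (concat xss) = xss ! i"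
  using tuple_subst_cyl[OF assms, of "[]"] by simp

lemma length_tuple_subst[simp]: "length (tuple_subst a x) = length a"
  by (simp add: tuple_subst_def)

lemma tuple_subst_in: "subst_sym a (length x) \<Longrightarrow> set x \<subseteq> W \<Longrightarrow> set (tuple_subst a x) \<subseteq> W"
  by (fastforce simp: tuple_subst_def subst_sym_def)

lemma tuple_subst_tuples: "subst_sym a k \<Longrightarrow> xs \<in> tuples W k \<Longrightarrow> tuple_subst a xs \<in> tuples W (length a)"
  using tuple_subst_in[of a xs W] by (simp add: tuples_def)

lemma tuple_subst_comp:
  assumes "subst_sym a (length b)"
  shows "tuple_subst (subst_comp b a) x = tuple_subst a (tuple_subst b x)"
  using assms by (fastforce simp: tuple_subst_def subst_comp_def subst_sym_def)

lemma subst_sym_comp: "subst_sym a (length b) \<Longrightarrow> subst_sym b m \<Longrightarrow> subst_sym (subst_comp b a) m"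
  by (fastforce simp: subst_comp_def subst_sym_def)

lemma length_subst_comp[simp]: "length (subst_comp b a) = length a"
  by (simp add: subst_comp_def)

lemma tuple_subst_id: "length x = n \<Longrightarrow> tuple_subst (subst_id n) x = x"
proof (rule nth_equalityI)
  assume k: "length x = n"
  show "length (tuple_subst (subst_id n) x) = length x" using k by (simp add: subst_id_def)
  fix i assume "i < length (tuple_subst (subst_id n) x)"
  then have "i < n" by (simp add: subst_id_def del: upt_Suc)
  then show "tuple_subst (subst_id n) x ! i = x ! i" using k
    by (simp add: tuple_subst_def subst_id_def del: upt_Suc)
qed

lemma subst_sym_id: "subst_sym (subst_id n) n"
  by (auto simp: subst_sym_def subst_id_def)

lemma length_subst_id[simp]: "length (subst_id n) = n"
  by (simp add: subst_id_def)

locale subA =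
  fixes S :: "'w list set pqf_alg" and W :: "'w set"
  assumes sub: "subalgebra S (relA W)"
begin

lemma alg: "pqf_alg S" using sub by (simp add: subalgebra_def)

lemma car: "r \<in> pcar S n \<Longrightarrow> r \<subseteq> tuples W n"
  using sub by (auto simp: subalgebra_def relA_def)

lemma zero[simp]: "pzero S n = {}" and one[simp]: "pone S n = tuples W n"
  using sub by (auto simp: subalgebra_def relA_def)

lemma zero_in: "{} \<in> pcar S n" and one_in: "tuples W n \<in> pcar S n"
  using alg zero one unfolding pqf_alg_def by metis+

lemma join[simp]: "x \<in> pcar S n \<Longrightarrow> y \<in> pcar S n \<Longrightarrow> pjoin S n x y = x \<union> y"
  and meet[simp]: "x \<in> pcar S n \<Longrightarrow> y \<in> pcar S n \<Longrightarrow> pmeet S n x y = x \<inter> y"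
  using sub by (auto simp: subalgebra_def relA_def)

lemma join_in: "x \<in> pcar S n \<Longrightarrow> y \<in> pcar S n \<Longrightarrow> x \<union> y \<in> pcar S n"
  and meet_in: "x \<in> pcar S n \<Longrightarrow> y \<in> pcar S n \<Longrightarrow> x \<inter> y \<in> pcar S n"
  using alg join meet unfolding pqf_alg_def by metis+

lemma subst[simp]: "subst_sym a k \<Longrightarrow> r \<in> pcar S (length a) \<Longrightarrow>
   psub S a k r = {xs \<in> tuples W k. tuple_subst a xs \<in> r}"
  using sub by (auto simp: subalgebra_def relA_def)

lemma subst_in: "subst_sym a k \<Longrightarrow> r \<in> pcar S (length a) \<Longrightarrow> psub S a k r \<in> pcar S k"
  using alg unfolding pqf_alg_def by blast

lemma bigmeet: "set xs \<subseteq> pcar S n \<Longrightarrow> pbigmeet S n xs = tuples W n \<inter> \<Inter>(set xs) \<and> pbigmeet S n xs \<in> pcar S n"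
proof (induction xs)
  case Nil then show ?case using one_in by (simp add: pbigmeet_def)
next
  case (Cons x xs)
  have ih: "pbigmeet S n xs = tuples W n \<inter> \<Inter>(set xs) \<and> pbigmeet S n xs \<in> pcar S n"
    by (rule Cons.IH) (use Cons.prems in simp)
  have eq: "pbigmeet S n (x#xs) = pmeet S n x (pbigmeet S n xs)" by (simp add: pbigmeet_def)
  have m1: "pbigmeet S n xs \<in> pcar S n" using ih by blast
  have "pbigmeet S n (x # xs) = x \<inter> pbigmeet S n xs" unfolding eq
    by (rule meet[OF _ m1]) (use Cons.prems in simp)
  then have e2: "pbigmeet S n (x#xs) = tuples W n \<inter> \<Inter>(set (x#xs))" using ih car[of x n] Cons.prems by auto
  have c: "pbigmeet S n (x#xs) \<in> pcar S n" unfolding eq using alg m1 Cons.prems unfolding pqf_alg_def by simp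
  show ?case by (intro conjI e2 c)
qed

lemma bigjoin: "set xs \<subseteq> pcar S n \<Longrightarrow> pbigjoin S n xs = \<Union>(set xs) \<and> pbigjoin S n xs \<in> pcar S n"
proof (induction xs)
  case Nil then show ?case using zero_in by (simp add: pbigjoin_def)
next
  case (Cons x xs)
  have ih: "pbigjoin S n xs = \<Union>(set xs) \<and> pbigjoin S n xs \<in> pcar S n"
    by (rule Cons.IH) (use Cons.prems in simp)
  have eq: "pbigjoin S n (x#xs) = pjoin S n x (pbigjoin S n xs)" by (simp add: pbigjoin_def)
  have m1: "pbigjoin S n xs \<in> pcar S n" using ih by blast
  have "pbigjoin S n (x # xs) = x \<union> pbigjoin S n xs" unfolding eq
    by (rule join[OF _ m1]) (use Cons.prems in simp)
  then have e2: "pbigjoin S n (x#xs) = \<Union>(set (x#xs))" using ih by auto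
  have c: "pbigjoin S n (x#xs) \<in> pcar S n" unfolding eq using alg m1 Cons.prems unfolding pqf_alg_def by simp
  show ?case by (intro conjI e2 c)
qed

lemma ax1: "axiom1 S"
  unfolding axiom1_def
proof (intro allI ballI)
  fix n x y z assume xyz: "x \<in> pcar S n" "y \<in> pcar S n" "z \<in> pcar S n"
  then show "pjoin S n x y = pjoin S n y x \<and> pmeet S n x y = pmeet S n y x \<and>
      pjoin S n (pjoin S n x y) z = pjoin S n x (pjoin S n y z) \<and>
      pmeet S n (pmeet S n x y) z = pmeet S n x (pmeet S n y z) \<and>
      pjoin S n x (pmeet S n x y) = x \<and> pmeet S n x (pjoin S n x y) = x \<and>
      pmeet S n x (pjoin S n y z) = pjoin S n (pmeet S n x y) (pmeet S n x z) \<and>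
      pjoin S n x (pzero S n) = x \<and> pmeet S n x (pone S n) = x"
    using car[OF xyz(1)] by (simp add: join_in meet_in zero_in one_in Un_ac Int_ac Int_Un_distrib) blast
qed

lemma ax2: "axiom2 S"
  unfolding axiom2_def
proof (intro allI impI conjI ballI)
  fix a k assume a: "subst_sym a k"
  show "psub S a k (pzero S (length a)) = pzero S k" using a zero_in by simp
  show "psub S a k (pone S (length a)) = pone S k" using a one_in
    by (auto intro: tuple_subst_tuples)
  fix r s assume rs: "r \<in> pcar S (length a)" "s \<in> pcar S (length a)"
  show "psub S a k (pjoin S (length a) r s) = pjoin S k (psub S a k r) (psub S a k s)"
    using a rs by (simp add: join_in subst_in del: subst) (simp add: join_in, blast)
  show "psub S a k (pmeet S (length a) r s) = pmeet S k (psub S a k r) (psub S a k s)"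
    using a rs by (simp add: meet_in subst_in del: subst) (simp add: meet_in, blast)
qed

lemma ax3: "axiom3 S"
  unfolding axiom3_def
proof (intro allI impI ballI)
  fix a b m r assume a: "subst_sym a (length b)" and b: "subst_sym b m" and r: "r \<in> pcar S (length a)"
  have i: "psub S a (length b) r \<in> pcar S (length b)" using subst_in[OF a r] .
  show "psub S (subst_comp b a) m r = psub S b m (psub S a (length b) r)"
    using a b r i subst_sym_comp[OF a b]
    by (auto simp: tuple_subst_comp dest: tuple_subst_tuples[OF b])
qed

lemma ax4: "axiom4 S"
  unfolding axiom4_def
proof (intro allI ballI)
  fix n r assume r: "r \<in> pcar S n"
  show "psub S (subst_id n) n r = r"
    using r car[OF r] subst_sym_id[of n] by (auto simp: tuple_subst_id tuples_def)
qed

lemma ax0: "axiom0 S"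
  unfolding axiom0_def Let_def
proof (intro allI impI)
  fix ks :: "nat list" and rs ss
  assume car_rs: "\<forall>i<length ks. rs i \<in> pcar S (ks ! i) \<and> ss i \<in> pcar S (ks ! i)"
  assume le: "ple S (sum_list ks) (pbigmeet S (sum_list ks) (map (\<lambda>i. psub S (cyl ks i) (sum_list ks) (rs i)) [0..<length ks]))
     (pbigjoin S (sum_list ks) (map (\<lambda>i. psub S (cyl ks i) (sum_list ks) (ss i)) [0..<length ks]))"
  define n where "n = sum_list ks"
  define m where "m = length ks"
  show "\<exists>i<length ks. ple S (ks ! i) (rs i) (ss i)"
  proof (rule ccontr)
    assume "\<not> ?thesis"
    then have nle: "\<forall>i<m. \<not> rs i \<subseteq> ss i" using car_rs unfolding ple_def m_def by auto
    define xss where "xss = map (\<lambda>i. SOME x. x \<in> rs i \<and> x \<notin> ss i) [0..<m]"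
    have xi: "xss ! i \<in> rs i \<and> xss ! i \<notin> ss i" if "i < m" for i
    proof -
      have "\<exists>x. x \<in> rs i \<and> x \<notin> ss i" using nle that by blast
      from someI_ex[OF this] show ?thesis unfolding xss_def using that by simp
    qed
    have lx: "length (xss ! i) = ks ! i \<and> set (xss ! i) \<subseteq> W" if "i < m" for i
      using xi[OF that] car[of "rs i" "ks ! i"] car_rs that unfolding m_def by (auto simp: tuples_def)
    have lenx: "length xss = m" by (simp add: xss_def)
    have ks: "ks = map length xss"
    proof (rule nth_equalityI)
      show "length ks = length (map length xss)" by (simp add: lenx m_def)
      fix i assume "i < length ks" then show "ks ! i = map length xss ! i"
        using lx[of i] by (simp add: m_def lenx)
    qed
    define y where "y = concat xss"
    have y: "tuple_subst (cyl ks i) y = xss ! i" if "i < m" for i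
      unfolding y_def using tuple_subst_cyl'[OF ks] that by (simp add: xss_def)
    have ylen: "length y = n" unfolding y_def n_def ks by (simp add: length_concat)
    have yset: "set y \<subseteq> W"
    proof
      fix z assume "z \<in> set y"
      then obtain xs where "xs \<in> set xss" "z \<in> set xs" by (auto simp: y_def)
      then obtain i where "i < m" "xs = xss ! i" using lenx by (auto simp: in_set_conv_nth)
      then show "z \<in> W" using lx \<open>z \<in> set xs\<close> by blast
    qed
    have ytup: "y \<in> tuples W n" using ylen yset by (simp add: tuples_def)
    have el1: "psub S (cyl ks i) n (f i) \<in> pcar S n"
      if "i < m" "f i \<in> pcar S (ks ! i)" for i f
      using subst_in[of "cyl ks i" n "f i"] subst_sym_cyl[of i ks] that
      unfolding n_def m_def by (simp del: subst)
    have el2: "psub S (cyl ks i) n (f i) = {xs \<in> tuples W n. tuple_subst (cyl ks i) xs \<in> f i}"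
      if "i < m" "f i \<in> pcar S (ks ! i)" for i f
      using subst[of "cyl ks i" n "f i"] subst_sym_cyl[of i ks] that
      unfolding n_def m_def by simp
    note el = el1 el2
    define BM where "BM = map (\<lambda>i. psub S (cyl ks i) n (rs i)) [0..<m]"
    define BJ where "BJ = map (\<lambda>i. psub S (cyl ks i) n (ss i)) [0..<m]"
    have BMc: "set BM \<subseteq> pcar S n" using el1 car_rs unfolding BM_def m_def by (auto simp del: subst)
    have BJc: "set BJ \<subseteq> pcar S n" using el1 car_rs unfolding BJ_def m_def by (auto simp del: subst)
    have le': "pbigmeet S n BM = pmeet S n (pbigmeet S n BM) (pbigjoin S n BJ)"
      using le unfolding ple_def BM_def BJ_def n_def m_def .
    then have "pbigmeet S n BM \<subseteq> pbigjoin S n BJ"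
      using bigmeet[OF BMc] bigjoin[OF BJc] by (metis Int_lower2 meet)
    moreover have "y \<in> pbigmeet S n BM"
      using bigmeet[OF BMc] ytup el car_rs y xi unfolding BM_def m_def by auto
    ultimately have "y \<in> \<Union>(set BJ)" using bigjoin[OF BJc] by auto
    then obtain i where "i < m" "y \<in> psub S (cyl ks i) n (ss i)" unfolding BJ_def by auto
    then show False using el[of i ss] car_rs y xi unfolding m_def by auto
  qed
qed

end


locale isoT =
  fixes L :: "('a, 'c) pqf_alg_scheme" and S :: "('b, 'd) pqf_alg_scheme" and h :: "nat \<Rightarrow> 'a \<Rightarrow> 'b"
  assumes algL: "pqf_alg L" and iso: "iso h L S"
begin

lemma hin: "x \<in> pcar L n \<Longrightarrow> h n x \<in> pcar S n"
  using iso unfolding iso_def hom_def by blast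

lemma inj: "x \<in> pcar L n \<Longrightarrow> y \<in> pcar L n \<Longrightarrow> h n x = h n y \<Longrightarrow> x = y"
  using iso unfolding iso_def bij_betw_def inj_on_def by blast

lemma h0: "h n (pzero L n) = pzero S n" and h1: "h n (pone L n) = pone S n"
  using iso unfolding iso_def hom_def by auto

lemma hj: "x \<in> pcar L n \<Longrightarrow> y \<in> pcar L n \<Longrightarrow> h n (pjoin L n x y) = pjoin S n (h n x) (h n y)"
  and hm: "x \<in> pcar L n \<Longrightarrow> y \<in> pcar L n \<Longrightarrow> h n (pmeet L n x y) = pmeet S n (h n x) (h n y)"
  using iso unfolding iso_def hom_def by auto

lemma hs: "subst_sym a k \<Longrightarrow> r \<in> pcar L (length a) \<Longrightarrow> h k (psub L a k r) = psub S a k (h (length a) r)"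
  using iso unfolding iso_def hom_def by auto

lemma zL: "pzero L n \<in> pcar L n" and oL: "pone L n \<in> pcar L n"
  using algL unfolding pqf_alg_def by auto

lemma jL: "x \<in> pcar L n \<Longrightarrow> y \<in> pcar L n \<Longrightarrow> pjoin L n x y \<in> pcar L n"
  and mL: "x \<in> pcar L n \<Longrightarrow> y \<in> pcar L n \<Longrightarrow> pmeet L n x y \<in> pcar L n"
  using algL unfolding pqf_alg_def by auto

lemma sL: "subst_sym a k \<Longrightarrow> r \<in> pcar L (length a) \<Longrightarrow> psub L a k r \<in> pcar L k"
  using algL unfolding pqf_alg_def by auto

lemmas cl = zL oL jL mL sL hin

lemma hbigmeet: "set xs \<subseteq> pcar L n \<Longrightarrow> h n (pbigmeet L n xs) = pbigmeet S n (map (h n) xs) \<and> pbigmeet L n xs \<in> pcar L n"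
proof (induction xs)
  case Nil then show ?case by (simp add: pbigmeet_def h1 oL)
next
  case (Cons x xs)
  have ih: "h n (pbigmeet L n xs) = pbigmeet S n (map (h n) xs) \<and> pbigmeet L n xs \<in> pcar L n"
    by (rule Cons.IH) (use Cons.prems in simp)
  have xc: "x \<in> pcar L n" using Cons.prems by simp
  have "h n (pbigmeet L n (x # xs)) = pmeet S n (h n x) (h n (pbigmeet L n xs))"
    unfolding pbigmeet_def using hm[OF xc] ih by (simp add: pbigmeet_def)
  then show ?case using ih xc mL by (simp add: pbigmeet_def)
qed

lemma hbigjoin: "set xs \<subseteq> pcar L n \<Longrightarrow> h n (pbigjoin L n xs) = pbigjoin S n (map (h n) xs) \<and> pbigjoin L n xs \<in> pcar L n"
proof (induction xs)
  case Nil then show ?case by (simp add: pbigjoin_def h0 zL)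
next
  case (Cons x xs)
  have ih: "h n (pbigjoin L n xs) = pbigjoin S n (map (h n) xs) \<and> pbigjoin L n xs \<in> pcar L n"
    by (rule Cons.IH) (use Cons.prems in simp)
  have xc: "x \<in> pcar L n" using Cons.prems by simp
  have "h n (pbigjoin L n (x # xs)) = pjoin S n (h n x) (h n (pbigjoin L n xs))"
    unfolding pbigjoin_def using hj[OF xc] ih by (simp add: pbigjoin_def)
  then show ?case using ih xc jL by (simp add: pbigjoin_def)
qed

lemma tr1: "axiom1 S \<Longrightarrow> axiom1 L"
  unfolding axiom1_def
proof (intro allI ballI)
  fix n x y z assume S1: "\<forall>n. \<forall>x\<in>pcar S n. \<forall>y\<in>pcar S n. \<forall>z\<in>pcar S n.
      pjoin S n x y = pjoin S n y x \<and> pmeet S n x y = pmeet S n y x \<and>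
      pjoin S n (pjoin S n x y) z = pjoin S n x (pjoin S n y z) \<and>
      pmeet S n (pmeet S n x y) z = pmeet S n x (pmeet S n y z) \<and>
      pjoin S n x (pmeet S n x y) = x \<and> pmeet S n x (pjoin S n x y) = x \<and>
      pmeet S n x (pjoin S n y z) = pjoin S n (pmeet S n x y) (pmeet S n x z) \<and>
      pjoin S n x (pzero S n) = x \<and> pmeet S n x (pone S n) = x"
  assume xyz: "x \<in> pcar L n" "y \<in> pcar L n" "z \<in> pcar L n"
  note hx = hin[OF xyz(1)] and hy = hin[OF xyz(2)] and hz = hin[OF xyz(3)]
  note I = S1[rule_format, OF hx hy hz]
  note J = S1[rule_format, OF hy hx hz]
  show "pjoin L n x y = pjoin L n y x \<and> pmeet L n x y = pmeet L n y x \<and>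
      pjoin L n (pjoin L n x y) z = pjoin L n x (pjoin L n y z) \<and>
      pmeet L n (pmeet L n x y) z = pmeet L n x (pmeet L n y z) \<and>
      pjoin L n x (pmeet L n x y) = x \<and> pmeet L n x (pjoin L n x y) = x \<and>
      pmeet L n x (pjoin L n y z) = pjoin L n (pmeet L n x y) (pmeet L n x z) \<and>
      pjoin L n x (pzero L n) = x \<and> pmeet L n x (pone L n) = x"
  proof (intro conjI)
    show "pjoin L n x y = pjoin L n y x"
      apply (rule inj[of _ n]) apply (simp_all add: xyz cl hj) using I by blast
    show "pmeet L n x y = pmeet L n y x"
      apply (rule inj[of _ n]) apply (simp_all add: xyz cl hm) using I by blast
    show "pjoin L n (pjoin L n x y) z = pjoin L n x (pjoin L n y z)"
      apply (rule inj[of _ n]) apply (simp_all add: xyz cl hj) using I by blast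
    show "pmeet L n (pmeet L n x y) z = pmeet L n x (pmeet L n y z)"
      apply (rule inj[of _ n]) apply (simp_all add: xyz cl hm) using I by blast
    show "pjoin L n x (pmeet L n x y) = x"
      apply (rule inj[of _ n]) apply (simp_all add: xyz cl hm hj) using I by blast
    show "pmeet L n x (pjoin L n x y) = x"
      apply (rule inj[of _ n]) apply (simp_all add: xyz cl hm hj) using I by blast
    show "pmeet L n x (pjoin L n y z) = pjoin L n (pmeet L n x y) (pmeet L n x z)"
      apply (rule inj[of _ n]) apply (simp_all add: xyz cl hm hj) using I by blast
    show "pjoin L n x (pzero L n) = x"
      apply (rule inj[of _ n]) apply (simp_all add: xyz cl hj h0) using I by blast
    show "pmeet L n x (pone L n) = x"
      apply (rule inj[of _ n]) apply (simp_all add: xyz cl hm h1) using I by blast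
  qed
qed

lemma tr2: "axiom2 S \<Longrightarrow> axiom2 L"
  unfolding axiom2_def
proof (intro allI impI conjI ballI)
  fix a k assume S2: "\<forall>a k. subst_sym a k \<longrightarrow>
      psub S a k (pzero S (length a)) = pzero S k \<and>
      psub S a k (pone S (length a)) = pone S k \<and>
      (\<forall>r\<in>pcar S (length a). \<forall>s\<in>pcar S (length a).
         psub S a k (pjoin S (length a) r s) = pjoin S k (psub S a k r) (psub S a k s) \<and>
         psub S a k (pmeet S (length a) r s) = pmeet S k (psub S a k r) (psub S a k s))"
    and a: "subst_sym a k"
  note I = S2[rule_format, OF a]
  show "psub L a k (pzero L (length a)) = pzero L k"
    by (rule inj[of _ k]) (use a I in \<open>simp_all add: cl hs h0\<close>)
  show "psub L a k (pone L (length a)) = pone L k"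
    by (rule inj[of _ k]) (use a I in \<open>simp_all add: cl hs h1\<close>)
  fix r s assume rs: "r \<in> pcar L (length a)" "s \<in> pcar L (length a)"
  note J = I[THEN conjunct2, THEN conjunct2, rule_format, OF hin[OF rs(1)] hin[OF rs(2)]]
  show "psub L a k (pjoin L (length a) r s) = pjoin L k (psub L a k r) (psub L a k s)"
    by (rule inj[of _ k]) (use a rs J in \<open>simp_all add: cl hs hj\<close>)
  show "psub L a k (pmeet L (length a) r s) = pmeet L k (psub L a k r) (psub L a k s)"
    by (rule inj[of _ k]) (use a rs J in \<open>simp_all add: cl hs hm\<close>)
qed

lemma tr3: "axiom3 S \<Longrightarrow> axiom3 L"
  unfolding axiom3_def
proof (intro allI impI ballI)
  fix a b m r assume S3: "\<forall>a b m. subst_sym a (length b) \<longrightarrow> subst_sym b m \<longrightarrow>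
      (\<forall>r\<in>pcar S (length a). psub S (subst_comp b a) m r = psub S b m (psub S a (length b) r))"
    and a: "subst_sym a (length b)" and b: "subst_sym b m" and r: "r \<in> pcar L (length a)"
  note I = S3[rule_format, OF a b hin[OF r]]
  have c: "subst_sym (subst_comp b a) m" using subst_sym_comp[OF a b] .
  show "psub L (subst_comp b a) m r = psub L b m (psub L a (length b) r)"
    by (rule inj[of _ m]) (use a b r c I in \<open>simp_all add: cl hs\<close>)
qed

lemma tr4: "axiom4 S \<Longrightarrow> axiom4 L"
  unfolding axiom4_def
proof (intro allI ballI)
  fix n r assume S4: "\<forall>n. \<forall>r\<in>pcar S n. psub S (subst_id n) n r = r" and r: "r \<in> pcar L n"
  note I = S4[rule_format, OF hin[OF r]]
  have c: "subst_sym (subst_id n) n" by (rule subst_sym_id)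
  show "psub L (subst_id n) n r = r"
    by (rule inj[of _ n]) (use r c I in \<open>simp_all add: cl hs\<close>)
qed

lemma tr0: "axiom0 S \<Longrightarrow> axiom0 L"
  unfolding axiom0_def Let_def
proof (intro allI impI)
  fix ks :: "nat list" and rs ss
  assume S0: "\<forall>ks rs ss. (\<forall>i<length ks. rs i \<in> pcar S (ks ! i) \<and> ss i \<in> pcar S (ks ! i)) \<longrightarrow>
      ple S (sum_list ks) (pbigmeet S (sum_list ks) (map (\<lambda>i. psub S (cyl ks i) (sum_list ks) (rs i)) [0..<length ks]))
       (pbigjoin S (sum_list ks) (map (\<lambda>i. psub S (cyl ks i) (sum_list ks) (ss i)) [0..<length ks])) \<longrightarrow>
      (\<exists>i<length ks. ple S (ks ! i) (rs i) (ss i))"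
  assume car_rs: "\<forall>i<length ks. rs i \<in> pcar L (ks ! i) \<and> ss i \<in> pcar L (ks ! i)"
  assume le: "ple L (sum_list ks) (pbigmeet L (sum_list ks) (map (\<lambda>i. psub L (cyl ks i) (sum_list ks) (rs i)) [0..<length ks]))
     (pbigjoin L (sum_list ks) (map (\<lambda>i. psub L (cyl ks i) (sum_list ks) (ss i)) [0..<length ks]))"
  define n where "n = sum_list ks"
  define rs' where "rs' i = h (ks ! i) (rs i)" for i
  define ss' where "ss' i = h (ks ! i) (ss i)" for i
  have c': "\<forall>i<length ks. rs' i \<in> pcar S (ks ! i) \<and> ss' i \<in> pcar S (ks ! i)"
    using car_rs hin unfolding rs'_def ss'_def by blast
  have sc: "psub L (cyl ks i) n (f i) \<in> pcar L n \<and> h n (psub L (cyl ks i) n (f i)) = psub S (cyl ks i) n (h (ks ! i) (f i))"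
    if "i < length ks" "f i \<in> pcar L (ks ! i)" for i f
    using sL[of "cyl ks i" n "f i"] hs[of "cyl ks i" n "f i"] subst_sym_cyl[OF that(1)] that(2)
    unfolding n_def by simp
  define BM where "BM = map (\<lambda>i. psub L (cyl ks i) n (rs i)) [0..<length ks]"
  define BJ where "BJ = map (\<lambda>i. psub L (cyl ks i) n (ss i)) [0..<length ks]"
  have BMc: "set BM \<subseteq> pcar L n" using sc car_rs unfolding BM_def by auto
  have BJc: "set BJ \<subseteq> pcar L n" using sc car_rs unfolding BJ_def by auto
  have mBM: "map (h n) BM = map (\<lambda>i. psub S (cyl ks i) n (rs' i)) [0..<length ks]"
    using sc car_rs unfolding BM_def rs'_def by auto
  have mBJ: "map (h n) BJ = map (\<lambda>i. psub S (cyl ks i) n (ss' i)) [0..<length ks]"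
    using sc car_rs unfolding BJ_def ss'_def by auto
  have "pbigmeet L n BM = pmeet L n (pbigmeet L n BM) (pbigjoin L n BJ)"
    using le unfolding ple_def BM_def BJ_def n_def .
  then have "h n (pbigmeet L n BM) = pmeet S n (h n (pbigmeet L n BM)) (h n (pbigjoin L n BJ))"
    using hm hbigmeet[OF BMc] hbigjoin[OF BJc] by metis
  then have "ple S n (pbigmeet S n (map (\<lambda>i. psub S (cyl ks i) n (rs' i)) [0..<length ks]))
      (pbigjoin S n (map (\<lambda>i. psub S (cyl ks i) n (ss' i)) [0..<length ks]))"
    unfolding ple_def using hbigmeet[OF BMc] hbigjoin[OF BJc] mBM mBJ by simp
  then obtain i where i: "i < length ks" "ple S (ks ! i) (rs' i) (ss' i)"
    using S0[THEN spec, THEN spec, THEN spec, of ks rs' ss'] c' unfolding n_def by blast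
  have "rs i = pmeet L (ks ! i) (rs i) (ss i)"
    by (rule inj[of _ "ks ! i"]) (use i car_rs in \<open>simp_all add: cl hm ple_def rs'_def ss'_def\<close>)
  then show "\<exists>i<length ks. ple L (ks ! i) (rs i) (ss i)" using i(1) unfolding ple_def by blast
qed

end

lemma converse:
  fixes L :: "'a pqf_alg" and W :: "'w set"
  assumes "pqf_alg L" "iso_to_sub_of_A L W"
  shows "axiom0 L \<and> axiom1 L \<and> axiom2 L \<and> axiom3 L \<and> axiom4 L"
proof -
  obtain S :: "'w list set pqf_alg" and h where S: "subalgebra S (relA W)" and h: "iso h L S"
    using assms(2) unfolding iso_to_sub_of_A_def by blast
  interpret subA S W using S by unfold_locales
  interpret isoT L S h using assms(1) h by unfold_locales
  show ?thesis using ax0 ax1 ax2 ax3 ax4 tr0 tr1 tr2 tr3 tr4 by blast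
qed

definition pmodel :: "('a, 'b) pqf_alg_scheme \<Rightarrow> 'e set \<Rightarrow> ('e list \<Rightarrow> 'a \<Rightarrow> bool) \<Rightarrow> bool" where
  "pmodel L W M \<longleftrightarrow> (\<forall>x. set x \<subseteq> W \<longrightarrow>
     M x (pone L (length x)) \<and> \<not> M x (pzero L (length x)) \<and>
     (\<forall>r\<in>pcar L (length x). \<forall>s\<in>pcar L (length x).
        (M x (pjoin L (length x) r s) \<longleftrightarrow> M x r \<or> M x s) \<and>
        (M x (pmeet L (length x) r s) \<longleftrightarrow> M x r \<and> M x s)) \<and>
     (\<forall>a. subst_sym a (length x) \<longrightarrow> (\<forall>r\<in>pcar L (length a).
        M (tuple_subst a x) r \<longleftrightarrow> M x (psub L a (length x) r))))"

lemma dlatL: "pqf_alg L \<Longrightarrow> axiom1 L \<Longrightarrow> dlat (pcar L n) (pjoin L n) (pmeet L n) (pzero L n) (pone L n)"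
  unfolding pqf_alg_def axiom1_def apply unfold_locales by blast+

lemma repr:
  fixes L :: "'a pqf_alg" and W :: "'w set" and M
  assumes alg: "pqf_alg L" and a1: "axiom1 L" and mod: "pmodel L W M"
    and sep: "\<And>n r s. r \<in> pcar L n \<Longrightarrow> s \<in> pcar L n \<Longrightarrow> \<not> ple L n r s \<Longrightarrow>
       (\<exists>x. set x \<subseteq> W \<and> length x = n \<and> M x r \<and> \<not> M x s)"
  shows "iso_to_sub_of_A L W"
proof -
  define h where "h n r = {x \<in> tuples W n. M x r}" for n r
  define S :: "'w list set pqf_alg" where "S = \<lparr>pcar = \<lambda>n. h n ` pcar L n, psub = psub (relA W),
     pzero = \<lambda>n. {}, pone = \<lambda>n. tuples W n, pjoin = \<lambda>n. (\<union>), pmeet = \<lambda>n. (\<inter>)\<rparr>"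
  have mx: "M x (pone L n) \<and> \<not> M x (pzero L n) \<and>
     (\<forall>r\<in>pcar L n. \<forall>s\<in>pcar L n.
        (M x (pjoin L n r s) \<longleftrightarrow> M x r \<or> M x s) \<and>
        (M x (pmeet L n r s) \<longleftrightarrow> M x r \<and> M x s)) \<and>
     (\<forall>a. subst_sym a n \<longrightarrow> (\<forall>r\<in>pcar L (length a).
        M (tuple_subst a x) r \<longleftrightarrow> M x (psub L a n r)))" if "x \<in> tuples W n" for x n
    using mod that unfolding pmodel_def tuples_def by auto
  have h0: "h n (pzero L n) = {}" for n unfolding h_def using mx by auto
  have h1: "h n (pone L n) = tuples W n" for n unfolding h_def using mx by auto
  have hj: "h n (pjoin L n r s) = h n r \<union> h n s" if "r \<in> pcar L n" "s \<in> pcar L n" for n r s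
    unfolding h_def using mx that by auto
  have hm: "h n (pmeet L n r s) = h n r \<inter> h n s" if "r \<in> pcar L n" "s \<in> pcar L n" for n r s
    unfolding h_def using mx that by auto
  have hs: "h k (psub L a k r) = psub (relA W) a k (h (length a) r)"
    if "subst_sym a k" "r \<in> pcar L (length a)" for a k r
    unfolding h_def relA_def using mx that tuple_subst_tuples[OF that(1)] by auto
  have hsub: "h n r \<subseteq> tuples W n" for n r unfolding h_def by auto
  have inj: "r = s" if "r \<in> pcar L n" "s \<in> pcar L n" "h n r = h n s" for n r s
  proof -
    interpret dlat "pcar L n" "pjoin L n" "pmeet L n" "pzero L n" "pone L n" using dlatL[OF alg a1] .
    have "ple L n r s" "ple L n s r"
      using sep[of r n s] sep[of s n r] that unfolding h_def tuples_def by blast+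
    then show ?thesis using le_antisym[of r s] that unfolding le_def ple_def by blast
  qed
  have cl: "pzero L n \<in> pcar L n" "pone L n \<in> pcar L n"
     "\<And>x y. x \<in> pcar L n \<Longrightarrow> y \<in> pcar L n \<Longrightarrow> pjoin L n x y \<in> pcar L n"
     "\<And>x y. x \<in> pcar L n \<Longrightarrow> y \<in> pcar L n \<Longrightarrow> pmeet L n x y \<in> pcar L n"
     "\<And>a k r. subst_sym a k \<Longrightarrow> r \<in> pcar L (length a) \<Longrightarrow> psub L a k r \<in> pcar L k" for n
    using alg unfolding pqf_alg_def by auto
  have algS: "pqf_alg S"
    unfolding pqf_alg_def
  proof (intro conjI allI impI ballI)
    fix n
    show "pzero S n \<in> pcar S n" unfolding S_def using h0[of n] cl(1)[of n] by (simp add: image_iff) metis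
    show "pone S n \<in> pcar S n" unfolding S_def using h1[of n] cl(2)[of n] by (simp add: image_iff) metis
    fix x y assume "x \<in> pcar S n" "y \<in> pcar S n"
    then obtain r s where rs: "r \<in> pcar L n" "s \<in> pcar L n" "x = h n r" "y = h n s" unfolding S_def by auto
    show "pjoin S n x y \<in> pcar S n" using rs hj[OF rs(1,2)] cl(3)[OF rs(1,2)] unfolding S_def by auto
    show "pmeet S n x y \<in> pcar S n" using rs hm[OF rs(1,2)] cl(4)[OF rs(1,2)] unfolding S_def by auto
  next
    fix a k x assume a: "subst_sym a k" and "x \<in> pcar S (length a)"
    then obtain r where r: "r \<in> pcar L (length a)" "x = h (length a) r" unfolding S_def by auto
    show "psub S a k x \<in> pcar S k" using hs[OF a r(1)] r cl(5)[OF a r(1)] unfolding S_def by auto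
  qed
  have "subalgebra S (relA W)"
    unfolding subalgebra_def
  proof (intro conjI algS allI impI ballI)
    fix n show "pcar S n \<subseteq> pcar (relA W) n" unfolding S_def relA_def using hsub by auto
    show "pzero S n = pzero (relA W) n" "pone S n = pone (relA W) n" unfolding S_def relA_def by auto
    fix x y assume "x \<in> pcar S n" "y \<in> pcar S n"
    show "pjoin S n x y = pjoin (relA W) n x y" "pmeet S n x y = pmeet (relA W) n x y"
      unfolding S_def relA_def by auto
  next
    fix a k r show "psub S a k r = psub (relA W) a k r" unfolding S_def by simp
  qed
  moreover have "iso h L S"
    unfolding iso_def hom_def
  proof (intro conjI allI impI ballI)
    fix n
    show "h n ` pcar L n \<subseteq> pcar S n" unfolding S_def by simp
    show "h n (pzero L n) = pzero S n" "h n (pone L n) = pone S n" unfolding S_def using h0 h1 by auto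
    show "bij_betw (h n) (pcar L n) (pcar S n)" unfolding bij_betw_def S_def inj_on_def using inj by auto
    fix x y assume "x \<in> pcar L n" "y \<in> pcar L n"
    then show "h n (pjoin L n x y) = pjoin S n (h n x) (h n y)" "h n (pmeet L n x y) = pmeet S n (h n x) (h n y)"
      unfolding S_def using hj hm by auto
  next
    fix a k r assume "subst_sym a k" "r \<in> pcar L (length a)"
    then show "h k (psub L a k r) = psub S a k (h (length a) r)" unfolding S_def using hs by simp
  qed
  ultimately show ?thesis unfolding iso_to_sub_of_A_def by blast
qed

lemma compactness:
  fixes Mod :: "('t \<Rightarrow> bool) \<Rightarrow> bool" and Sg :: "('t \<times> bool) set"
  assumes loc: "\<And>V. (\<And>A. finite A \<Longrightarrow> \<exists>N. Mod N \<and> (\<forall>a\<in>A. N a = V a)) \<Longrightarrow> Mod V"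
    and fin: "\<And>Psi. finite Psi \<Longrightarrow> Psi \<subseteq> Sg \<Longrightarrow> \<exists>N. Mod N \<and> (\<forall>p\<in>Psi. N (fst p) = snd p)"
  shows "\<exists>V. Mod V \<and> (\<forall>p\<in>Sg. V (fst p) = snd p)"
proof -
  define fsat where "fsat Phi \<longleftrightarrow> (\<forall>Psi. finite Psi \<longrightarrow> Psi \<subseteq> Phi \<longrightarrow> (\<exists>N. Mod N \<and> (\<forall>p\<in>Psi. N (fst p) = snd p)))" for Phi
  define Z where "Z = {Phi. Sg \<subseteq> Phi \<and> fsat Phi}"
  have fsatD: "\<exists>N. Mod N \<and> (\<forall>p\<in>Psi. N (fst p) = snd p)" if "fsat Phi" "finite Psi" "Psi \<subseteq> Phi" for Phi Psi
    using that unfolding fsat_def by auto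
  have nfsatD: "\<exists>Psi. finite Psi \<and> Psi \<subseteq> Phi \<and> \<not> (\<exists>N. Mod N \<and> (\<forall>p\<in>Psi. N (fst p) = snd p))"
    if "\<not> fsat Phi" for Phi
    using that unfolding fsat_def by auto
  have "\<forall>Ch\<in>chains Z. \<exists>U\<in>Z. \<forall>X\<in>Ch. X \<subseteq> U"
  proof
    fix Ch assume Ch: "Ch \<in> chains Z"
    have sub: "Ch \<subseteq> Z" using Ch unfolding chains_def by blast
    have sch: "subset.chain Z Ch" using Ch unfolding chains_alt_def by blast
    have "Sg \<union> \<Union>Ch \<in> Z"
      unfolding Z_def
    proof (intro CollectI conjI)
      show "Sg \<subseteq> Sg \<union> \<Union>Ch" by blast
      show "fsat (Sg \<union> \<Union>Ch)" unfolding fsat_def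
      proof (intro allI impI)
        fix Psi assume fP: "finite Psi" and PS: "Psi \<subseteq> Sg \<union> \<Union>Ch"
        show "\<exists>N. Mod N \<and> (\<forall>p\<in>Psi. N (fst p) = snd p)"
        proof (cases "Ch = {}")
          case True then show ?thesis using fin[OF fP] PS by simp
        next
          case False
          have SgX: "\<And>X. X \<in> Ch \<Longrightarrow> Sg \<subseteq> X" using sub unfolding Z_def by auto
          obtain X0 where "X0 \<in> Ch" using False by blast
          then have "Sg \<subseteq> \<Union>Ch" using SgX by blast
          then have "Psi \<subseteq> \<Union>Ch" using PS by blast
          then obtain B where "B \<in> Ch" "Psi \<subseteq> B" by (rule finite_subset_Union_chain[OF fP _ False sch])
          then have "fsat B" using sub unfolding Z_def by auto
          then show ?thesis using fsatD fP \<open>Psi \<subseteq> B\<close> by blast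
        qed
      qed
    qed
    then show "\<exists>U\<in>Z. \<forall>X\<in>Ch. X \<subseteq> U" by (rule bexI[rotated]) auto
  qed
  from Zorn_Lemma2[OF this] obtain D where D: "D \<in> Z" and max0: "\<forall>X\<in>Z. D \<subseteq> X \<longrightarrow> X = D"
    by (elim bexE)
  have SgD: "Sg \<subseteq> D" and fD: "fsat D" using D unfolding Z_def by auto
  have compl: "(a, True) \<in> D \<or> (a, False) \<in> D" for a
  proof (rule ccontr)
    assume nb: "\<not> ((a, True) \<in> D \<or> (a, False) \<in> D)"
    have nf: "\<not> fsat (insert (a, b) D)" if "(a, b) \<notin> D" for b
    proof
      assume "fsat (insert (a, b) D)"
      then have "insert (a, b) D \<in> Z" using SgD unfolding Z_def by blast
      then have "insert (a, b) D = D" using max0 by blast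
      then show False using that by blast
    qed
    obtain P1 where P1: "finite P1" "P1 \<subseteq> insert (a, True) D" "\<not> (\<exists>N. Mod N \<and> (\<forall>p\<in>P1. N (fst p) = snd p))"
      using nfsatD[OF nf[of True]] nb by blast
    obtain P2 where P2: "finite P2" "P2 \<subseteq> insert (a, False) D" "\<not> (\<exists>N. Mod N \<and> (\<forall>p\<in>P2. N (fst p) = snd p))"
      using nfsatD[OF nf[of False]] nb by blast
    have f3: "finite ((P1 - {(a, True)}) \<union> (P2 - {(a, False)}))" using P1 P2 by blast
    have s3: "(P1 - {(a, True)}) \<union> (P2 - {(a, False)}) \<subseteq> D" using P1 P2 by blast
    from fsatD[OF fD f3 s3] obtain N where N: "Mod N" "\<forall>p\<in>(P1 - {(a, True)}) \<union> (P2 - {(a, False)}). N (fst p) = snd p"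
      by (elim exE conjE)
    show False
    proof (cases "N a")
      case True
      then have Na: "N a = True" by simp
      have "\<forall>p\<in>P1. N (fst p) = snd p"
      proof
        fix p assume pP: "p \<in> P1"
        show "N (fst p) = snd p"
        proof (cases "p = (a, True)")
          case True then show ?thesis using Na by simp
        next
          case False then show ?thesis using N(2) pP by blast
        qed
      qed
      then show False using P1(3) N(1) by blast
    next
      case False
      then have Na: "N a = False" by simp
      have "\<forall>p\<in>P2. N (fst p) = snd p"
      proof
        fix p assume pP: "p \<in> P2"
        show "N (fst p) = snd p"
        proof (cases "p = (a, False)")
          case True then show ?thesis using Na by simp
        next
          case False then show ?thesis using N(2) pP by blast
        qed
      qed
      then show False using P2(3) N(1) by blast
    qed
  qed
  have cons: "\<not> ((a, True) \<in> D \<and> (a, False) \<in> D)" for a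
  proof
    assume "(a, True) \<in> D \<and> (a, False) \<in> D"
    then have "{(a, True), (a, False)} \<subseteq> D" by blast
    then obtain N where "\<forall>p\<in>{(a, True), (a, False)}. N (fst p) = snd p"
      using fsatD[OF fD, of "{(a, True), (a, False)}"] by auto
    then show False by simp
  qed
  define V where "V a = ((a, True) \<in> D)" for a
  have VD: "(a, V a) \<in> D" for a using compl[of a] unfolding V_def by (cases "(a, True) \<in> D") auto
  have "Mod V"
  proof (rule loc)
    fix A :: "'t set" assume "finite A"
    moreover have "(\<lambda>a. (a, V a)) ` A \<subseteq> D" using VD by blast
    ultimately obtain N where "Mod N" "\<forall>p\<in>(\<lambda>a. (a, V a)) ` A. N (fst p) = snd p"
      using fsatD[OF fD, of "(\<lambda>a. (a, V a)) ` A"] by auto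
    then show "\<exists>N. Mod N \<and> (\<forall>a\<in>A. N a = V a)" by auto
  qed
  moreover have "\<forall>p\<in>Sg. V (fst p) = snd p"
  proof
    fix p assume "p \<in> Sg"
    then have "(fst p, snd p) \<in> D" using SgD by auto
    then show "V (fst p) = snd p" using cons[of "fst p"] unfolding V_def by (cases "snd p") auto
  qed
  ultimately show ?thesis by blast
qed

context dlat begin

lemma bigM_C: "set xs \<subseteq> C \<Longrightarrow> foldr mt xs on \<in> C"
  by (induction xs) (auto intro: mt_C on_C)

lemma bigJ_C: "set xs \<subseteq> C \<Longrightarrow> foldr jn xs zr \<in> C"
  by (induction xs) (auto intro: jn_C zr_C)

lemma bigM_le: "set xs \<subseteq> C \<Longrightarrow> x \<in> set xs \<Longrightarrow> le (foldr mt xs on) x"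
proof (induction xs)
  case Nil then show ?case by simp
next
  case (Cons y ys)
  have yC: "y \<in> C" and ysC: "set ys \<subseteq> C" and xC: "x \<in> C" using Cons.prems by auto
  have FC: "foldr mt ys on \<in> C" using bigM_C[OF ysC] .
  show ?case
  proof (cases "x = y")
    case True then show ?thesis using le_mt1[OF yC FC] by simp
  next
    case False then have "x \<in> set ys" using Cons.prems by simp
    then have "le (foldr mt ys on) x" using Cons.IH ysC by simp
    then show ?thesis using le_trans[OF mt_C[OF yC FC] FC xC le_mt2[OF yC FC]] by simp
  qed
qed

lemma bigJ_ge: "set xs \<subseteq> C \<Longrightarrow> x \<in> set xs \<Longrightarrow> le x (foldr jn xs zr)"
proof (induction xs)
  case Nil then show ?case by simp
next
  case (Cons y ys)
  have yC: "y \<in> C" and ysC: "set ys \<subseteq> C" and xC: "x \<in> C" using Cons.prems by auto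
  have FC: "foldr jn ys zr \<in> C" using bigJ_C[OF ysC] .
  show ?case
  proof (cases "x = y")
    case True then show ?thesis using le_jn1[OF yC FC] by simp
  next
    case False then have "x \<in> set ys" using Cons.prems by simp
    then have "le x (foldr jn ys zr)" using Cons.IH ysC by simp
    then show ?thesis using le_trans[OF xC FC jn_C[OF yC FC] _ le_jn2[OF yC FC]] by simp
  qed
qed

end

definition enc :: "nat \<Rightarrow> 'a \<Rightarrow> 'a \<Rightarrow> nat \<Rightarrow> ('a \<times> nat) set" where
  "enc n r s i = {(r, 3*n), (s, 3*n+1), (r, 3*i+2)}"

definition tup :: "nat \<times> 'a \<times> 'a \<Rightarrow> ('a \<times> nat) set list" where
  "tup q = map (enc (fst q) (fst (snd q)) (snd (snd q))) [0..<fst q]"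

lemma enc_inj:
  assumes "enc n r s i = enc n' r' s' i'"
  shows "n = n' \<and> r = r' \<and> s = s' \<and> i = i'"
proof -
  have 1: "(r, 3*n) \<in> enc n' r' s' i'" unfolding assms[symmetric] by (simp add: enc_def)
  have 2: "(s, 3*n+1) \<in> enc n' r' s' i'" unfolding assms[symmetric] by (simp add: enc_def)
  have 3: "(r, 3*i+2) \<in> enc n' r' s' i'" unfolding assms[symmetric] by (simp add: enc_def)
  from 1 have "r = r' \<and> n = n'" unfolding enc_def by auto presburger+
  moreover from 2 have "s = s'" unfolding enc_def by auto presburger+
  moreover from 3 have "i = i'" unfolding enc_def by auto presburger+
  ultimately show ?thesis by blast
qed

lemma enc_ne: "enc n r s i \<noteq> {}" by (simp add: enc_def)

lemma length_tup[simp]: "length (tup q) = fst q" by (simp add: tup_def)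

lemma distinct_tup: "distinct (tup q)"
  unfolding tup_def by (auto simp: distinct_map inj_on_def dest: enc_inj)

lemma tup_disj: "q \<noteq> q' \<Longrightarrow> set (tup q) \<inter> set (tup q') = {}"
  unfolding tup_def by (auto dest!: enc_inj simp: prod_eq_iff)

lemma tup_ne: "{} \<notin> set (tup q)"
  unfolding tup_def by (auto simp: enc_def)

lemma distinct_concat':
  "(\<And>i. i < length xss \<Longrightarrow> distinct (xss!i)) \<Longrightarrow>
   (\<And>i j. i < length xss \<Longrightarrow> j < length xss \<Longrightarrow> i \<noteq> j \<Longrightarrow> set (xss!i) \<inter> set (xss!j) = {}) \<Longrightarrow>
   distinct (concat xss)"
proof (induction xss)
  case Nil then show ?case by simp
next
  case (Cons x xss)
  have "distinct x" using Cons.prems(1)[of 0] by simp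
  moreover have "distinct (concat xss)"
    by (rule Cons.IH) (use Cons.prems(1)[of "Suc _"] Cons.prems(2)[of "Suc _" "Suc _"] in auto)
  moreover have "set x \<inter> set (concat xss) = {}"
  proof (rule ccontr)
    assume "set x \<inter> set (concat xss) \<noteq> {}"
    then obtain z where z: "z \<in> set x" "z \<in> set (concat xss)" by blast
    then obtain ys where ys: "ys \<in> set xss" "z \<in> set ys" by auto
    then obtain j where j: "j < length xss" "xss ! j = ys" by (auto simp: in_set_conv_nth)
    have "z \<in> set (xss ! j)" using ys j by simp
    then show False using Cons.prems(2)[of 0 "Suc j"] z j by auto
  qed
  ultimately show ?case by simp
qed

lemma cyl_append: "i < length ks1 \<Longrightarrow> cyl (ks1 @ ks2) i = cyl ks1 i"
  by (simp add: cyl_def nth_append)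

locale ax =
  fixes L :: "'a pqf_alg"
  assumes alg: "pqf_alg L" and a0: "axiom0 L" and a1: "axiom1 L" and a2: "axiom2 L"
    and a3: "axiom3 L" and a4: "axiom4 L"
begin

lemma D: "dlat (pcar L n) (pjoin L n) (pmeet L n) (pzero L n) (pone L n)"
  using dlatL[OF alg a1] .

lemma le_ple: "dlat.le (pmeet L n) = ple L n"
  using dlat.le_def[OF D] by (simp add: ple_def fun_eq_iff)

lemma cl: "pzero L n \<in> pcar L n" "pone L n \<in> pcar L n"
     "\<And>x y. x \<in> pcar L n \<Longrightarrow> y \<in> pcar L n \<Longrightarrow> pjoin L n x y \<in> pcar L n"
     "\<And>x y. x \<in> pcar L n \<Longrightarrow> y \<in> pcar L n \<Longrightarrow> pmeet L n x y \<in> pcar L n"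
     "\<And>a k r. subst_sym a k \<Longrightarrow> r \<in> pcar L (length a) \<Longrightarrow> psub L a k r \<in> pcar L k"
  using alg unfolding pqf_alg_def by auto

lemma psub_nil: assumes "t \<in> pcar L 0" shows "psub L [] 0 t = t"
proof -
  have "psub L (subst_id 0) 0 t = t" using a4 assms unfolding axiom4_def by blast
  moreover have "subst_id 0 = []" by (simp add: subst_id_def)
  ultimately show ?thesis by simp
qed

lemma s2: "subst_sym a k \<Longrightarrow> psub L a k (pzero L (length a)) = pzero L k"
  "subst_sym a k \<Longrightarrow> psub L a k (pone L (length a)) = pone L k"
  "subst_sym a k \<Longrightarrow> r \<in> pcar L (length a) \<Longrightarrow> s \<in> pcar L (length a) \<Longrightarrow>
     psub L a k (pjoin L (length a) r s) = pjoin L k (psub L a k r) (psub L a k s)"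
  "subst_sym a k \<Longrightarrow> r \<in> pcar L (length a) \<Longrightarrow> s \<in> pcar L (length a) \<Longrightarrow>
     psub L a k (pmeet L (length a) r s) = pmeet L k (psub L a k r) (psub L a k s)"
  using a2 unfolding axiom2_def by auto

lemma s3: "subst_sym a (length b) \<Longrightarrow> subst_sym b m \<Longrightarrow> r \<in> pcar L (length a) \<Longrightarrow>
    psub L (subst_comp b a) m r = psub L b m (psub L a (length b) r)"
  using a3 unfolding axiom3_def by auto

lemma zero_ne_one0: "pzero L 0 \<noteq> pone L 0"
proof
  assume e: "pzero L 0 = pone L 0"
  have "ple L 0 (pone L 0) (pzero L 0)"
    using e dlat.mt_on[OF D cl(2)] unfolding ple_def by simp
  then have "ple L (sum_list []) (pbigmeet L (sum_list []) (map (\<lambda>i. psub L (cyl [] i) (sum_list []) (rs i)) [0..<length []]))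
              (pbigjoin L (sum_list []) (map (\<lambda>i. psub L (cyl [] i) (sum_list []) (ss i)) [0..<length []]))" for rs ss
    by (simp add: pbigmeet_def pbigjoin_def)
  from a0[unfolded axiom0_def Let_def, THEN spec, THEN spec, THEN spec, of "[]" "\<lambda>_. pone L 0" "\<lambda>_. pone L 0"]
    this[of "\<lambda>_. pone L 0" "\<lambda>_. pone L 0"]
  show False by simp
qed

lemma sort0: assumes x: "x \<in> pcar L 0" shows "x = pzero L 0 \<or> x = pone L 0"
proof -
  interpret d: dlat "pcar L 0" "pjoin L 0" "pmeet L 0" "pzero L 0" "pone L 0" using D .
  define ks :: "nat list" where "ks = [0, 0]"
  define rs where "rs i = (if i = 0 then x else pone L 0)" for i :: nat
  define ss where "ss i = (if i = 0 then pzero L 0 else x)" for i :: nat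
  have c: "\<forall>i<length ks. rs i \<in> pcar L (ks ! i) \<and> ss i \<in> pcar L (ks ! i)"
    using x cl by (auto simp: ks_def rs_def ss_def less_Suc_eq nth_Cons')
  have cy: "cyl ks i = []" if "i < 2" for i
  proof -
    have "i = 0 \<or> i = 1" using that by arith
    then show ?thesis by (auto simp: cyl_def ks_def)
  qed
  have u: "[0..<length ks] = [0, 1]" by (simp add: ks_def upt_rec)
  have cz: "cyl [0,0] 0 = []" "cyl [0,0] (Suc 0) = []" by (simp_all add: cyl_def)
  have bm: "pbigmeet L (sum_list ks) (map (\<lambda>i. psub L (cyl ks i) (sum_list ks) (rs i)) [0..<length ks]) = x"
    using x cl by (simp add: u cz ks_def psub_nil rs_def pbigmeet_def d.mt_on)
  have bj: "pbigjoin L (sum_list ks) (map (\<lambda>i. psub L (cyl ks i) (sum_list ks) (ss i)) [0..<length ks]) = x"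
    using x cl by (simp add: u cz ks_def psub_nil ss_def pbigjoin_def d.jn_zr d.jn_comm[of "pzero L 0" x])
  have "ple L 0 x x" using d.le_refl[OF x] le_ple by simp
  have sk: "sum_list ks = 0" by (simp add: ks_def)
  have pl: "ple L (sum_list ks) (pbigmeet L (sum_list ks) (map (\<lambda>i. psub L (cyl ks i) (sum_list ks) (rs i)) [0..<length ks]))
     (pbigjoin L (sum_list ks) (map (\<lambda>i. psub L (cyl ks i) (sum_list ks) (ss i)) [0..<length ks]))"
    apply (subst bm, subst bj) unfolding sk by (rule \<open>ple L 0 x x\<close>)
  from a0[unfolded axiom0_def Let_def, THEN spec, THEN spec, THEN spec, of ks rs ss] c pl
  obtain i where i: "i < length ks" "ple L (ks ! i) (rs i) (ss i)" by blast
  show ?thesis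
  proof (cases "i = 0")
    case True
    then have "ple L 0 x (pzero L 0)" using i by (simp add: ks_def rs_def ss_def)
    then have "x = pmeet L 0 (pzero L 0) x" unfolding ple_def using d.mt_comm[OF x cl(1)] by simp
    also have "\<dots> = pzero L 0" using d.le_zr[OF x] le_ple unfolding ple_def by simp
    finally show ?thesis by simp
  next
    case False
    then have "i = 1" using i by (simp add: ks_def)
    then have "ple L 0 (pone L 0) x" using i by (simp add: ks_def rs_def ss_def)
    then have "pone L 0 = pmeet L 0 x (pone L 0)" unfolding ple_def using d.mt_comm[OF x cl(2)] by simp
    then show ?thesis using d.mt_on[OF x] by simp
  qed
qed

end

context ax begin

lemma triv_case:
  assumes t: "pzero L 1 = pone L 1"
  shows "\<exists>W :: ('a \<times> nat) set set. iso_to_sub_of_A L W"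
proof -
  define M :: "('a \<times> nat) set list \<Rightarrow> 'a \<Rightarrow> bool" where "M x r = (r = pone L 0)" for x r
  have allz: "pzero L n = pone L n" if "1 \<le> n" for n
  proof -
    have sb: "subst_sym [1] n" using that by (simp add: subst_sym_def)
    show ?thesis using s2(1)[OF sb] s2(2)[OF sb] t by simp
  qed
  have triv: "r = pzero L n" if "1 \<le> n" "r \<in> pcar L n" for n r
  proof -
    interpret d: dlat "pcar L n" "pjoin L n" "pmeet L n" "pzero L n" "pone L n" by (rule D)
    have "r = pmeet L n r (pone L n)" using d.mt_on[OF that(2)] by simp
    also have "\<dots> = pmeet L n (pzero L n) r" using allz[OF that(1)] d.mt_comm[OF that(2) cl(1)] by simp
    also have "\<dots> = pzero L n" using d.le_zr[OF that(2)] unfolding d.le_def by simp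
    finally show ?thesis .
  qed
  interpret d0: dlat "pcar L 0" "pjoin L 0" "pmeet L 0" "pzero L 0" "pone L 0" by (rule D)
  have z1: "pzero L 0 \<noteq> pone L 0" by (rule zero_ne_one0)
  have jz: "pjoin L 0 (pzero L 0) (pzero L 0) = pzero L 0" "pjoin L 0 (pzero L 0) (pone L 0) = pone L 0"
    "pjoin L 0 (pone L 0) (pzero L 0) = pone L 0" "pjoin L 0 (pone L 0) (pone L 0) = pone L 0"
    using d0.jn_zr d0.jn_comm d0.jn_idem cl(1) cl(2) by metis+
  have mz: "pmeet L 0 (pzero L 0) (pzero L 0) = pzero L 0" "pmeet L 0 (pzero L 0) (pone L 0) = pzero L 0"
    "pmeet L 0 (pone L 0) (pzero L 0) = pzero L 0" "pmeet L 0 (pone L 0) (pone L 0) = pone L 0"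
    using d0.mt_on d0.mt_comm d0.mt_idem cl(1) cl(2) by metis+
  have mod: "pmodel L {} M"
    unfolding pmodel_def
  proof (intro allI impI)
    fix x :: "('a \<times> nat) set list" assume "set x \<subseteq> {}"
    then have x: "x = []" by simp
    have j: "(M x (pjoin L (length x) r s) = (M x r \<or> M x s)) \<and> (M x (pmeet L (length x) r s) = (M x r \<and> M x s))"
      if "r \<in> pcar L (length x)" "s \<in> pcar L (length x)" for r s
    proof -
      have "r = pzero L 0 \<or> r = pone L 0" "s = pzero L 0 \<or> s = pone L 0" using sort0 that x by auto
      then show ?thesis using jz mz z1 x unfolding M_def by auto
    qed
    have sub: "M (tuple_subst a x) r = M x (psub L a (length x) r)"
      if "subst_sym a (length x)" "r \<in> pcar L (length a)" for a r
    proof -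
      have "a = []" using that(1) x by (auto simp: subst_sym_def)
      then show ?thesis using that x psub_nil by (simp add: M_def tuple_subst_def)
    qed
    show "M x (pone L (length x)) \<and> \<not> M x (pzero L (length x)) \<and>
         (\<forall>r\<in>pcar L (length x). \<forall>s\<in>pcar L (length x).
             (M x (pjoin L (length x) r s) = (M x r \<or> M x s)) \<and> (M x (pmeet L (length x) r s) = (M x r \<and> M x s))) \<and>
         (\<forall>a. subst_sym a (length x) \<longrightarrow> (\<forall>r\<in>pcar L (length a). M (tuple_subst a x) r = M x (psub L a (length x) r)))"
      using j sub z1 x by (simp add: M_def)
  qed
  have sep: "\<exists>x. set x \<subseteq> {} \<and> length x = n \<and> M x r \<and> \<not> M x s"
    if rs: "r \<in> pcar L n" "s \<in> pcar L n" "\<not> ple L n r s" for n r s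
  proof (cases "n = 0")
    case False
    then have "1 \<le> n" by simp
    then have "r = pzero L n" "s = pzero L n" using triv[of n r] triv[of n s] rs by auto
    then have "ple L n r s" using dlat.le_refl[OF D rs(1)] le_ple by simp
    then show ?thesis using rs by blast
  next
    case True
    have "r \<noteq> pzero L 0" using rs True d0.le_zr le_ple by fastforce
    then have r: "r = pone L 0" using sort0 rs True by blast
    have "s \<noteq> pone L 0" using rs True d0.le_on le_ple by fastforce
    then have s: "s = pzero L 0" using sort0 rs True by blast
    show ?thesis using r s z1 True by (intro exI[of _ "[]"]) (simp add: M_def)
  qed
  show ?thesis using repr[OF alg a1 mod sep] by blast
qed

end

context ax begin

definition Req :: "(nat \<times> 'a \<times> 'a) set" where
  "Req = {q. fst (snd q) \<in> pcar L (fst q) \<and> snd (snd q) \<in> pcar L (fst q) \<and>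
      \<not> ple L (fst q) (fst (snd q)) (snd (snd q))}"

lemma finsat:
  assumes nt: "pzero L 1 \<noteq> pone L 1" and fQ: "finite Q" and QR: "Q \<subseteq> Req"
  shows "\<exists>M. pmodel L (UNIV :: ('a \<times> nat) set set) M \<and>
     (\<forall>q\<in>Q. M (tup q) (fst (snd q)) \<and> \<not> M (tup q) (snd (snd q)))"
proof -
  obtain qs where qs: "distinct qs" "set qs = Q" using finite_distinct_list[OF fQ] by blast
  define m where "m = length qs"
  define ks where "ks = map fst qs @ [1::nat]"
  define N where "N = sum_list ks"
  define rs where "rs i = (if i < m then fst (snd (qs!i)) else pone L 1)" for i
  define ss where "ss i = (if i < m then snd (snd (qs!i)) else pzero L 1)" for i
  have lks: "length ks = Suc m" by (simp add: ks_def m_def)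
  have ksi: "ks ! i = (if i < m then fst (qs!i) else 1)" if "i < length ks" for i
  proof (cases "i < m")
    case True then show ?thesis by (simp add: ks_def m_def nth_append)
  next
    case False then have "i = m" using that lks by simp
    then show ?thesis by (simp add: ks_def m_def nth_append)
  qed
  have qR: "qs!i \<in> Req" if "i < m" for i using QR qs(2) that unfolding m_def by auto
  have car: "\<forall>i<length ks. rs i \<in> pcar L (ks!i) \<and> ss i \<in> pcar L (ks!i)"
  proof (intro allI impI)
    fix i assume i: "i < length ks"
    show "rs i \<in> pcar L (ks!i) \<and> ss i \<in> pcar L (ks!i)"
    proof (cases "i < m")
      case True then show ?thesis using qR[OF True] ksi[OF i] by (simp add: rs_def ss_def Req_def)
    next
      case False then show ?thesis using ksi[OF i] cl(1,2) by (simp add: rs_def ss_def)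
    qed
  qed
  have nle: "\<not> ple L (ks!i) (rs i) (ss i)" if i: "i < length ks" for i
  proof (cases "i < m")
    case True then show ?thesis using qR[OF True] ksi[OF i] by (simp add: rs_def ss_def Req_def)
  next
    case False
    interpret d1: dlat "pcar L 1" "pjoin L 1" "pmeet L 1" "pzero L 1" "pone L 1" by (rule D)
    show ?thesis
    proof
      assume "ple L (ks!i) (rs i) (ss i)"
      then have "pone L 1 = pmeet L 1 (pone L 1) (pzero L 1)" using ksi[OF i] False
        by (simp add: rs_def ss_def ple_def)
      also have "\<dots> = pzero L 1" using d1.mt_comm[OF cl(2) cl(1)] d1.mt_on[OF cl(1)] by simp
      finally show False using nt by simp
    qed
  qed
  define BMl where "BMl = map (\<lambda>i. psub L (cyl ks i) N (rs i)) [0..<length ks]"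
  define BJl where "BJl = map (\<lambda>i. psub L (cyl ks i) N (ss i)) [0..<length ks]"
  have elC: "psub L (cyl ks i) N (f i) \<in> pcar L N" if "i < length ks" "f i \<in> pcar L (ks ! i)" for i f
    using cl(5)[of "cyl ks i" N "f i"] subst_sym_cyl[OF that(1)] that(2) unfolding N_def by simp
  have BMl_C: "set BMl \<subseteq> pcar L N" using elC car unfolding BMl_def by auto
  have BJl_C: "set BJl \<subseteq> pcar L N" using elC car unfolding BJl_def by auto
  have nbm: "\<not> ple L N (pbigmeet L N BMl) (pbigjoin L N BJl)"
  proof
    assume "ple L N (pbigmeet L N BMl) (pbigjoin L N BJl)"
    from a0[unfolded axiom0_def Let_def, THEN spec, THEN spec, THEN spec, of ks rs ss] car
      this[unfolded BMl_def BJl_def N_def] nle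
    show False by blast
  qed
  interpret d: dlat "pcar L N" "pjoin L N" "pmeet L N" "pzero L N" "pone L N" by (rule D)
  have BM_C: "pbigmeet L N BMl \<in> pcar L N" unfolding pbigmeet_def using d.bigM_C[OF BMl_C] .
  have BJ_C: "pbigjoin L N BJl \<in> pcar L N" unfolding pbigjoin_def using d.bigJ_C[OF BJl_C] .
  have nle': "\<not> d.le (pbigmeet L N BMl) (pbigjoin L N BJl)" using nbm le_ple by simp
  obtain P where P: "P \<subseteq> pcar L N" "pbigmeet L N BMl \<in> P" "pbigjoin L N BJl \<notin> P" "pone L N \<in> P" "pzero L N \<notin> P"
    and Pops: "\<forall>x\<in>pcar L N. \<forall>y\<in>pcar L N. (pmeet L N x y \<in> P \<longleftrightarrow> x \<in> P \<and> y \<in> P) \<and>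
        (pjoin L N x y \<in> P \<longleftrightarrow> x \<in> P \<or> y \<in> P)"
    using d.prime_filter[OF BM_C BJ_C nle'] by blast
  have Pr: "psub L (cyl ks i) N (rs i) \<in> P" if i: "i < length ks" for i
  proof -
    let ?c = "psub L (cyl ks i) N (rs i)"
    have cC: "?c \<in> pcar L N" using elC[OF i] car i by blast
    have "?c \<in> set BMl" using i unfolding BMl_def by auto
    then have "d.le (pbigmeet L N BMl) ?c" using d.bigM_le[OF BMl_C] unfolding pbigmeet_def by simp
    then have "pbigmeet L N BMl = pmeet L N (pbigmeet L N BMl) ?c" unfolding d.le_def .
    then show ?thesis using Pops BM_C cC P(2) by metis
  qed
  have Ps: "psub L (cyl ks i) N (ss i) \<notin> P" if i: "i < length ks" for i
  proof
    let ?c = "psub L (cyl ks i) N (ss i)"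
    assume cP: "?c \<in> P"
    have cC: "?c \<in> pcar L N" using elC[OF i] car i by blast
    have "?c \<in> set BJl" using i unfolding BJl_def by auto
    then have "d.le ?c (pbigjoin L N BJl)" using d.bigJ_ge[OF BJl_C] unfolding pbigjoin_def by simp
    then have "pbigjoin L N BJl = pjoin L N ?c (pbigjoin L N BJl)" using d.le_jn_iff[OF cC BJ_C] by simp
    then show False using Pops BJ_C cC P(3) cP by metis
  qed
  define xss where "xss = map tup qs"
  define y where "y = concat xss @ [{}]"
  have lxss: "map length xss = map fst qs" by (simp add: xss_def)
  have ks2: "ks = map length xss @ [1]" by (simp add: ks_def lxss)
  have ylen: "length y = N" unfolding y_def N_def ks2 by (simp add: length_concat)
  have dc: "distinct (concat xss)"
  proof (rule distinct_concat')
    fix i assume "i < length xss" then show "distinct (xss ! i)" by (simp add: xss_def distinct_tup)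
  next
    fix i j assume "i < length xss" "j < length xss" "i \<noteq> j"
    then have "qs ! i \<noteq> qs ! j" using qs(1) by (simp add: xss_def nth_eq_iff_index_eq)
    then show "set (xss ! i) \<inter> set (xss ! j) = {}" using \<open>i < length xss\<close> \<open>j < length xss\<close>
      by (simp add: xss_def tup_disj)
  qed
  have "{} \<notin> set (concat xss)" by (simp add: xss_def tup_ne)
  then have ydist: "distinct y" using dc by (simp add: y_def)
  define f where "f e = (if e \<in> set y then Suc (SOME p. p < length y \<and> y!p = e) else 1)" for e
  have fy: "f (y!p) = Suc p" if "p < length y" for p
  proof -
    have ex: "\<exists>p'. p' < length y \<and> y!p' = y!p" using that by blast
    have "(SOME p'. p' < length y \<and> y!p' = y!p) = p"
      using someI_ex[OF ex] ydist that nth_eq_iff_index_eq by blast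
    then show ?thesis unfolding f_def using that by simp
  qed
  have frange: "1 \<le> f e \<and> f e \<le> N" for e
  proof (cases "e \<in> set y")
    case True
    then have ex: "\<exists>p. p < length y \<and> y!p = e" by (simp add: in_set_conv_nth)
    show ?thesis using someI_ex[OF ex] True ylen unfolding f_def by simp
  next
    case False
    have "1 \<le> N" using ylen by (simp add: y_def)
    then show ?thesis using False unfolding f_def by simp
  qed
  define M where "M x r = (psub L (map f x) N r \<in> P)" for x r
  have ss_f: "subst_sym (map f x) N" for x using frange by (auto simp: subst_sym_def)
  have model: "pmodel L (UNIV :: ('a \<times> nat) set set) M"
    unfolding pmodel_def
  proof (intro allI impI conjI ballI)
    fix x :: "('a \<times> nat) set list"
    have sb: "subst_sym (map f x) N" by (rule ss_f)
    show "M x (pone L (length x))" unfolding M_def using s2(2)[OF sb] P(4) by simp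
    show "\<not> M x (pzero L (length x))" unfolding M_def using s2(1)[OF sb] P(5) by simp
    fix r s assume r: "r \<in> pcar L (length x)" and s: "s \<in> pcar L (length x)"
    have r': "r \<in> pcar L (length (map f x))" and s': "s \<in> pcar L (length (map f x))" using r s by simp_all
    have c1: "psub L (map f x) N r \<in> pcar L N" using cl(5)[OF sb r'] .
    have c2: "psub L (map f x) N s \<in> pcar L N" using cl(5)[OF sb s'] .
    show "M x (pjoin L (length x) r s) = (M x r \<or> M x s)"
      unfolding M_def using s2(3)[OF sb r' s'] Pops c1 c2 by simp
    show "M x (pmeet L (length x) r s) = (M x r \<and> M x s)"
      unfolding M_def using s2(4)[OF sb r' s'] Pops c1 c2 by simp
  next
    fix x :: "('a \<times> nat) set list" and a r
    assume a: "subst_sym a (length x)" and r: "r \<in> pcar L (length a)"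
    have "map f (tuple_subst a x) = map (\<lambda>i. f (x!(i-1))) a" by (simp add: tuple_subst_def)
    also have "\<dots> = subst_comp (map f x) a" unfolding subst_comp_def
    proof (rule map_cong[OF refl])
      fix i assume "i \<in> set a"
      then have "i - 1 < length x" using a by (force simp: subst_sym_def)
      then show "f (x!(i-1)) = map f x ! (i-1)" by simp
    qed
    finally have "map f (tuple_subst a x) = subst_comp (map f x) a" .
    moreover have "subst_sym a (length (map f x))" using a by simp
    ultimately show "M (tuple_subst a x) r = M x (psub L a (length x) r)"
      unfolding M_def using s3[of a "map f x" N r] ss_f r by simp
  qed
  have mapf: "map f (tuple_subst c y) = c" if "set c \<subseteq> {1..length y}" for c
    using that by (induction c) (auto simp: tuple_subst_def fy)
  have cons: "\<forall>q\<in>Q. M (tup q) (fst (snd q)) \<and> \<not> M (tup q) (snd (snd q))"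
  proof
    fix q assume "q \<in> Q"
    then obtain i where i: "i < m" "qs!i = q" using qs(2) unfolding m_def by (auto simp: in_set_conv_nth)
    have il: "i < length ks" using i lks by simp
    have "cyl ks i = cyl (map length xss) i" unfolding ks2 using i
      by (intro cyl_append) (simp add: xss_def m_def)
    then have tq: "tuple_subst (cyl ks i) y = tup q"
      using tuple_subst_cyl[of "map length xss" xss i "[{}]"] i unfolding y_def
      by (simp add: xss_def m_def)
    have "set (cyl ks i) \<subseteq> {1..length y}" using set_cyl[OF il] ylen N_def by simp
    then have mf: "map f (tup q) = cyl ks i" using mapf tq by metis
    show "M (tup q) (fst (snd q)) \<and> \<not> M (tup q) (snd (snd q))"
      unfolding M_def mf using Pr[OF il] Ps[OF il] i by (simp add: rs_def ss_def N_def)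
  qed
  show ?thesis using model cons by blast
qed

lemma local_model:
  assumes loc: "\<And>A. finite A \<Longrightarrow> \<exists>N. pmodel L W (\<lambda>x r. N (x, r)) \<and> (\<forall>a\<in>A. N a = V a)"
  shows "pmodel L W (\<lambda>x r. V (x, r))"
  unfolding pmodel_def
proof (intro allI impI conjI ballI)
  fix x assume sx: "set x \<subseteq> W"
  have inst: "N (x, pone L (length x)) \<and> \<not> N (x, pzero L (length x)) \<and>
     (\<forall>r\<in>pcar L (length x). \<forall>s\<in>pcar L (length x).
        (N (x, pjoin L (length x) r s) \<longleftrightarrow> N (x, r) \<or> N (x, s)) \<and>
        (N (x, pmeet L (length x) r s) \<longleftrightarrow> N (x, r) \<and> N (x, s))) \<and>
     (\<forall>a. subst_sym a (length x) \<longrightarrow> (\<forall>r\<in>pcar L (length a).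
        N (tuple_subst a x, r) \<longleftrightarrow> N (x, psub L a (length x) r)))"
    if "pmodel L W (\<lambda>x r. N (x, r))" for N
    using that[unfolded pmodel_def, rule_format, OF sx] .
  obtain N1 where N1: "pmodel L W (\<lambda>x r. N1 (x, r))" "\<forall>a\<in>{(x, pone L (length x))}. N1 a = V a"
    using loc[of "{(x, pone L (length x))}"] by auto
  show "V (x, pone L (length x))" using inst[OF N1(1)] N1(2) by simp
  obtain N2 where N2: "pmodel L W (\<lambda>x r. N2 (x, r))" "\<forall>a\<in>{(x, pzero L (length x))}. N2 a = V a"
    using loc[of "{(x, pzero L (length x))}"] by auto
  show "\<not> V (x, pzero L (length x))" using inst[OF N2(1)] N2(2) by simp
  fix r s assume r: "r \<in> pcar L (length x)" and s: "s \<in> pcar L (length x)"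
  obtain N3 where N3: "pmodel L W (\<lambda>x r. N3 (x, r))"
     "\<forall>a\<in>{(x, pjoin L (length x) r s), (x, pmeet L (length x) r s), (x, r), (x, s)}. N3 a = V a"
    using loc[of "{(x, pjoin L (length x) r s), (x, pmeet L (length x) r s), (x, r), (x, s)}"] by auto
  show "V (x, pjoin L (length x) r s) = (V (x, r) \<or> V (x, s))" using inst[OF N3(1)] N3(2) r s by auto
  show "V (x, pmeet L (length x) r s) = (V (x, r) \<and> V (x, s))" using inst[OF N3(1)] N3(2) r s by auto
next
  fix x a r assume sx: "set x \<subseteq> W" and a: "subst_sym a (length x)" and r: "r \<in> pcar L (length a)"
  obtain N where N: "pmodel L W (\<lambda>x r. N (x, r))"
     "\<forall>p\<in>{(tuple_subst a x, r), (x, psub L a (length x) r)}. N p = V p"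
    using loc[of "{(tuple_subst a x, r), (x, psub L a (length x) r)}"] by auto
  have "N (tuple_subst a x, r) \<longleftrightarrow> N (x, psub L a (length x) r)"
    using N(1)[unfolded pmodel_def, rule_format, OF sx] a r by blast
  then show "V (tuple_subst a x, r) = V (x, psub L a (length x) r)" using N(2) by simp
qed

lemma forward: "\<exists>W :: ('a \<times> nat) set set. iso_to_sub_of_A L W"
proof (cases "pzero L 1 = pone L 1")
  case True then show ?thesis using triv_case by blast
next
  case nt: False
  define lit1 where "lit1 q = ((tup q, fst (snd q)), True)" for q :: "nat \<times> 'a \<times> 'a"
  define lit2 where "lit2 q = ((tup q, snd (snd q)), False)" for q :: "nat \<times> 'a \<times> 'a"
  define Sg where "Sg = lit1 ` Req \<union> lit2 ` Req"
  define Mod where "Mod V = pmodel L (UNIV :: ('a \<times> nat) set set) (\<lambda>x r. V (x, r))" for V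
  have "\<exists>V. Mod V \<and> (\<forall>p\<in>Sg. V (fst p) = snd p)"
  proof (rule compactness)
    fix V assume "\<And>A. finite A \<Longrightarrow> \<exists>N. Mod N \<and> (\<forall>a\<in>A. N a = V a)"
    then show "Mod V" unfolding Mod_def by (rule local_model)
  next
    fix Psi assume fP: "finite Psi" and PS: "Psi \<subseteq> Sg"
    define g where "g p = (SOME q. q \<in> Req \<and> (p = lit1 q \<or> p = lit2 q))" for p
    have g: "g p \<in> Req \<and> (p = lit1 (g p) \<or> p = lit2 (g p))" if "p \<in> Psi" for p
    proof -
      have "\<exists>q. q \<in> Req \<and> (p = lit1 q \<or> p = lit2 q)" using that PS unfolding Sg_def by blast
      from someI_ex[OF this] show ?thesis unfolding g_def .
    qed
    have fg: "finite (g ` Psi)" using fP by simp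
    have gR: "g ` Psi \<subseteq> Req" using g by blast
    obtain M where M: "pmodel L UNIV M" "\<forall>q\<in>g ` Psi. M (tup q) (fst (snd q)) \<and> \<not> M (tup q) (snd (snd q))"
      using finsat[OF nt fg gR] by blast
    have "Mod (\<lambda>p. M (fst p) (snd p))" unfolding Mod_def using M(1) by simp
    moreover have "\<forall>p\<in>Psi. M (fst (fst p)) (snd (fst p)) = snd p"
    proof
      fix p assume p: "p \<in> Psi"
      then have "g p \<in> g ` Psi" by blast
      then show "M (fst (fst p)) (snd (fst p)) = snd p" using g[OF p] M(2) by (auto simp: lit1_def lit2_def)
    qed
    ultimately show "\<exists>N. Mod N \<and> (\<forall>p\<in>Psi. N (fst p) = snd p)" by (intro exI[of _ "\<lambda>p. M (fst p) (snd p)"]) simp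
  qed
  then obtain V where V: "Mod V" "\<forall>p\<in>Sg. V (fst p) = snd p" by blast
  have sep: "\<exists>x. set x \<subseteq> (UNIV :: ('a \<times> nat) set set) \<and> length x = n \<and> V (x, r) \<and> \<not> V (x, s)"
    if "r \<in> pcar L n" "s \<in> pcar L n" "\<not> ple L n r s" for n r s
  proof -
    have q: "(n, r, s) \<in> Req" using that by (simp add: Req_def)
    then have "lit1 (n, r, s) \<in> Sg" "lit2 (n, r, s) \<in> Sg" unfolding Sg_def by auto
    then have "V (tup (n, r, s), r)" "\<not> V (tup (n, r, s), s)" using V(2) by (auto simp: lit1_def lit2_def)
    then show ?thesis by (intro exI[of _ "tup (n, r, s)"]) simp
  qed
  show ?thesis using repr[OF alg a1 V(1)[unfolded Mod_def] sep] by blast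
qed

end

theorem theorem3p2:
  fixes L :: "'a pqf_alg"
  assumes "pqf_alg L"
  shows "(axiom0 L \<and> axiom1 L \<and> axiom2 L \<and> axiom3 L \<and> axiom4 L
            \<longrightarrow> (\<exists>W :: ('a \<times> nat) set set. iso_to_sub_of_A L W))
       \<and> (\<forall>W :: 'w set. iso_to_sub_of_A L W
            \<longrightarrow> axiom0 L \<and> axiom1 L \<and> axiom2 L \<and> axiom3 L \<and> axiom4 L)"
proof (rule conjI)
  show "axiom0 L \<and> axiom1 L \<and> axiom2 L \<and> axiom3 L \<and> axiom4 L
            \<longrightarrow> (\<exists>W :: ('a \<times> nat) set set. iso_to_sub_of_A L W)"
  proof
    assume "axiom0 L \<and> axiom1 L \<and> axiom2 L \<and> axiom3 L \<and> axiom4 L"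
    then interpret ax L using assms by unfold_locales auto
    show "\<exists>W :: ('a \<times> nat) set set. iso_to_sub_of_A L W" by (rule forward)
  qed
next
  show "\<forall>W :: 'w set. iso_to_sub_of_A L W
            \<longrightarrow> axiom0 L \<and> axiom1 L \<and> axiom2 L \<and> axiom3 L \<and> axiom4 L"
  proof (intro allI impI)
    fix W :: "'w set" assume "iso_to_sub_of_A L W"
    then show "axiom0 L \<and> axiom1 L \<and> axiom2 L \<and> axiom3 L \<and> axiom4 L" using converse assms by blast
  qed
qed

end
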